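(* Every tame topological Kuranishi atlas $\mathcal K$ has a reduction.
   Context: Notation: for subsets $V'\subset V$ of a topological space, $V'\sqsubset V$ means the closure of $V'$ in $V$ is compact. $X$ is a compact metrizable space. Charts: a topological Kuranishi chart for $X$ with open footprint $F\subset X$ is a tuple $\mathbf K=(U,\mathbb E,\mathfrak s,\psi)$ where $U$ is a separable, locally compact, metrizable space; $\mathbb E$ is a separable, locally compact, metrizable space with continuous maps $\mathrm{pr}:\mathbb E\to U$ and $0:U\to\mathbb E$ with $\mathrm{pr}\circ0=\mathrm{id}_U$; $\mathfrak s:U\to\mathbb E$ is continuous with $\mathrm{pr}\circ\mathfrak s=\mathrm{id}_U$; and $\psi$ is a homeomorphism from $\mathfrak s^{-1}(0):=\{x\in U:\mathfrak s(x)=0(x)\}$ onto $F$. Coordinate changes: for charts $\mathbf K_I,\mathbf K_J$ with $F_I\cap F_J\neq\emptyset$, a coordinate change $\widehat\Phi_{IJ}:\mathbf K_I\to\mathbf K_J$ consists of an open set $U_{IJ}\subset U_I$ with $U_{IJ}\cap\mathfrak s_I^{-1}(0_I)=\psi_I^{-1}(F_I\cap F_J)$ and a topological embedding $\widehat\Phi_{IJ}:\mathrm{pr}_I^{-1}(U_{IJ})\to\mathbb E_J$ such that there is a topological embedding $\phi_{IJ}:U_{IJ}\to U_J$ with $\mathrm{pr}_J\circ\widehat\Phi_{IJ}=\phi_{IJ}\circ\mathrm{pr}_I$, $0_J\circ\phi_{IJ}=\widehat\Phi_{IJ}\circ0_I$ and $\mathfrak s_J\circ\phi_{IJ}=\widehat\Phi_{IJ}\circ\mathfrak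 s_I$ on $U_{IJ}$, and $\phi_{IJ}=\psi_J^{-1}\circ\psi_I$ on $U_{IJ}\cap\mathfrak s_I^{-1}(0_I)$. Atlases: a covering family of basic charts is a finite family $(\mathbf K_i)_{i=1,\dots,N}$ of charts whose footprints cover $X$; $\mathcal I_{\mathcal K}$ is the set of nonempty $I\subset\{1,\dots,N\}$ with $F_I:=\bigcap_{i\in I}F_i\neq\emptyset$. Transition data consist of a chart $\mathbf K_J$ with footprint $F_J$ for each $J\in\mathcal I_{\mathcal K}$ with $|J|\ge2$ (and $\mathbf K_{\{i\}}:=\mathbf K_i$), and a coordinate change $\widehat\Phi_{IJ}:\mathbf K_I\to\mathbf K_J$ for all $I\subsetneq J$ in $\mathcal I_{\mathcal K}$. We set $U_{II}:=U_I$, $\phi_{II}:=\mathrm{id}_{U_I}$. For $I\subsetneq J\subsetneq K$ let $U_{IJK}:=U_{IJ}\cap\phi_{IJ}^{-1}(U_{JK})$. The triple satisfies the weak cocycle condition if $\widehat\Phi_{JK}\circ\widehat\Phi_{IJ}=\widehat\Phi_{IK}$ on $\mathrm{pr}_I^{-1}(U_{IJK}\cap U_{IK})$; the cocycle condition if in addition $U_{IJK}\subset U_{IK}$; the strong cocycle condition if in addition $U_{IJK}=U_{IK}$. A weak topological Kuranishi atlas $\mathcal K$ is a covering family with transition data satisfying the weak cocycle condition for all such triples; a topological Kuranishi atlas is one satisfying the cocycle condition for all triples. Filtrations: a weak topological Kuranishi atlas is filtered if it is equipped with closed subsets $\mathbb E_{IJ}\subset\mathbb E_J$ for all $J\in\mathcal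 I_{\mathcal K}$ and $I\subset J$ (including $I=\emptyset$) such that (i) $\mathbb E_{JJ}=\mathbb E_J$ and $\mathbb E_{\emptyset J}=\mathrm{im}\,0_J$; (ii) $\widehat\Phi_{JK}(\mathrm{pr}_J^{-1}(U_{JK})\cap\mathbb E_{IJ})=\mathbb E_{IK}\cap\mathrm{pr}_K^{-1}(\mathrm{im}\,\phi_{JK})$ for $I\subset J\subsetneq K$; (iii) $\mathbb E_{IJ}\cap\mathbb E_{HJ}=\mathbb E_{(I\cap H)J}$ for $I,H\subset J$; (iv) $\mathrm{im}\,\phi_{IJ}$ is an open subset of $\mathfrak s_J^{-1}(\mathbb E_{IJ})$ for $I\subsetneq J$. Tameness: a filtered weak topological Kuranishi atlas is tame if $U_{IJ}\cap U_{IK}=U_{I(J\cup K)}$ for all $I,J,K\in\mathcal I_{\mathcal K}$ with $I\subset J,K$ (where $U_{IL}:=\emptyset$ if $L\notin\mathcal I_{\mathcal K}$), and $\phi_{IJ}(U_{IK})=U_{JK}\cap\mathfrak s_J^{-1}(\mathbb E_{IJ})$ for all $I\subset J\subset K$ in $\mathcal I_{\mathcal K}$ (equalities of indices allowed). Virtual neighbourhood: for a topological Kuranishi atlas, $|\mathcal K|$ is the quotient of $\bigsqcup_{I\in\mathcal I_{\mathcal K}}U_I=\{(I,x):x\in U_I\}$ by the equivalence relation generated by $(I,x)\sim(J,\phi_{IJ}(x))$ for $I\subset J$, $x\in U_{IJ}$, with the quotient topology and projection $\pi_{\mathcal K}$; $\iota_{\mathcal K}(X):=\pi_{\mathcal K}\big(\bigsqcup_I\{I\}\times\mathfrak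 s_I^{-1}(0_I)\big)\subset|\mathcal K|$. Reductions: a reduction of a tame topological Kuranishi atlas $\mathcal K$ is a tuple $\mathcal V=\bigsqcup_{I\in\mathcal I_{\mathcal K}}V_I$ of (possibly empty) open subsets $V_I\subset U_I$ such that (i) $V_I\sqsubset U_I$ for all $I$, and $V_I\neq\emptyset$ implies $V_I\cap\mathfrak s_I^{-1}(0_I)\neq\emptyset$; (ii) if $\pi_{\mathcal K}(\overline{V_I})\cap\pi_{\mathcal K}(\overline{V_J})\neq\emptyset$ (closures in $U_I$, $U_J$) then $I\subset J$ or $J\subset I$; (iii) $\iota_{\mathcal K}(X)\subset\pi_{\mathcal K}(\mathcal V)=\bigcup_I\pi_{\mathcal K}(V_I)$. *)

theory Defs
  imports "HOL-Analysis.Analysis"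
begin

text \<open>All domains U of the charts live in one ambient type 'u, all bundles E in one
ambient type 'e; each space is an abstract topology on a subset of that type.\<close>

record ('x, 'u, 'e) kchart =
  cU   :: "'u topology"
  cE   :: "'e topology"
  cpr  :: "'e \<Rightarrow> 'u"
  czero :: "'u \<Rightarrow> 'e"
  cs   :: "'u \<Rightarrow> 'e"
  cpsi :: "'u \<Rightarrow> 'x"
  cF   :: "'x set"

definition zeroset :: "('x, 'u, 'e) kchart \<Rightarrow> 'u set" where
  "zeroset K = {x \<in> topspace (cU K). cs K x = czero K x}"

definition is_kchart :: "'x topology \<Rightarrow> ('x, 'u, 'e) kchart \<Rightarrow> bool" where
  "is_kchart X K \<longleftrightarrow>
     openin X (cF K) \<and>
     separable_space (cU K) \<and> locally_compact_space (cU K) \<and> metrizable_space (cU K) \<and>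
     separable_space (cE K) \<and> locally_compact_space (cE K) \<and> metrizable_space (cE K) \<and>
     continuous_map (cE K) (cU K) (cpr K) \<and>
     continuous_map (cU K) (cE K) (czero K) \<and>
     (\<forall>x \<in> topspace (cU K). cpr K (czero K x) = x) \<and>
     continuous_map (cU K) (cE K) (cs K) \<and>
     (\<forall>x \<in> topspace (cU K). cpr K (cs K x) = x) \<and>
     homeomorphic_map (subtopology (cU K) (zeroset K)) (subtopology X (cF K)) (cpsi K)"

text \<open>Coordinate change from KI to KJ: domain UIJ, bundle map Phi, base map phi.
(The base embedding phi, whose existence is required, is recorded as data.)\<close>

definition is_coord_change ::
  "('x, 'u, 'e) kchart \<Rightarrow> ('x, 'u, 'e) kchart \<Rightarrow> 'u set \<Rightarrow> ('e \<Rightarrow> 'e) \<Rightarrow> ('u \<Rightarrow> 'u) \<Rightarrow> bool" where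
  "is_coord_change KI KJ UIJ Phi phi \<longleftrightarrow>
     openin (cU KI) UIJ \<and>
     UIJ \<inter> zeroset KI = {x \<in> zeroset KI. cpsi KI x \<in> cF KI \<inter> cF KJ} \<and>
     embedding_map (subtopology (cE KI) {e \<in> topspace (cE KI). cpr KI e \<in> UIJ}) (cE KJ) Phi \<and>
     embedding_map (subtopology (cU KI) UIJ) (cU KJ) phi \<and>
     (\<forall>e \<in> topspace (cE KI). cpr KI e \<in> UIJ \<longrightarrow> cpr KJ (Phi e) = phi (cpr KI e)) \<and>
     (\<forall>x \<in> UIJ. czero KJ (phi x) = Phi (czero KI x)) \<and>
     (\<forall>x \<in> UIJ. cs KJ (phi x) = Phi (cs KI x)) \<and>
     (\<forall>x \<in> UIJ \<inter> zeroset KI. phi x = inv_into (zeroset KJ) (cpsi KJ) (cpsi KI x))"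

record ('x, 'u, 'e) katlas =
  aN   :: nat
  aK   :: "nat set \<Rightarrow> ('x, 'u, 'e) kchart"
  aUU  :: "nat set \<Rightarrow> nat set \<Rightarrow> 'u set"
  aPhi :: "nat set \<Rightarrow> nat set \<Rightarrow> 'e \<Rightarrow> 'e"
  aphi :: "nat set \<Rightarrow> nat set \<Rightarrow> 'u \<Rightarrow> 'u"
  aEE  :: "nat set \<Rightarrow> nat set \<Rightarrow> 'e set"

text \<open>Basic chart i is aK A {i}; its footprint is F_i.\<close>

definition Iset :: "('x, 'u, 'e) katlas \<Rightarrow> nat set set" where
  "Iset A = {I. I \<noteq> {} \<and> I \<subseteq> {1..aN A} \<and> (\<Inter>i\<in>I. cF (aK A {i})) \<noteq> {}}"

text \<open>Conventions U_II = U_I, phi_II = id, and U_IL = {} if L is not an index.\<close>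

definition UUx :: "('x, 'u, 'e) katlas \<Rightarrow> nat set \<Rightarrow> nat set \<Rightarrow> 'u set" where
  "UUx A I J = (if J \<notin> Iset A then {} else if I = J then topspace (cU (aK A I)) else aUU A I J)"

definition phix :: "('x, 'u, 'e) katlas \<Rightarrow> nat set \<Rightarrow> nat set \<Rightarrow> 'u \<Rightarrow> 'u" where
  "phix A I J = (if I = J then id else aphi A I J)"

definition UUU :: "('x, 'u, 'e) katlas \<Rightarrow> nat set \<Rightarrow> nat set \<Rightarrow> nat set \<Rightarrow> 'u set" where
  "UUU A I J K = {x \<in> aUU A I J. aphi A I J x \<in> aUU A J K}"

definition transition_data :: "'x topology \<Rightarrow> ('x, 'u, 'e) katlas \<Rightarrow> bool" where
  "transition_data X A \<longleftrightarrow>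
     (\<forall>i \<in> {1..aN A}. is_kchart X (aK A {i})) \<and>
     (\<Union>i\<in>{1..aN A}. cF (aK A {i})) = topspace X \<and>
     (\<forall>J \<in> Iset A. card J \<ge> 2 \<longrightarrow>
         is_kchart X (aK A J) \<and> cF (aK A J) = (\<Inter>i\<in>J. cF (aK A {i}))) \<and>
     (\<forall>I \<in> Iset A. \<forall>J \<in> Iset A. I \<subset> J \<longrightarrow>
         is_coord_change (aK A I) (aK A J) (aUU A I J) (aPhi A I J) (aphi A I J))"

definition weak_cocycle :: "('x, 'u, 'e) katlas \<Rightarrow> bool" where
  "weak_cocycle A \<longleftrightarrow>
     (\<forall>I \<in> Iset A. \<forall>J \<in> Iset A. \<forall>K \<in> Iset A. I \<subset> J \<and> J \<subset> K \<longrightarrow>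
        (\<forall>e \<in> topspace (cE (aK A I)). cpr (aK A I) e \<in> UUU A I J K \<inter> aUU A I K \<longrightarrow>
            aPhi A J K (aPhi A I J e) = aPhi A I K e))"

definition cocycle :: "('x, 'u, 'e) katlas \<Rightarrow> bool" where
  "cocycle A \<longleftrightarrow> weak_cocycle A \<and>
     (\<forall>I \<in> Iset A. \<forall>J \<in> Iset A. \<forall>K \<in> Iset A. I \<subset> J \<and> J \<subset> K \<longrightarrow> UUU A I J K \<subseteq> aUU A I K)"

definition kur_atlas :: "'x topology \<Rightarrow> ('x, 'u, 'e) katlas \<Rightarrow> bool" where
  "kur_atlas X A \<longleftrightarrow> transition_data X A \<and> cocycle A"

definition filtered :: "('x, 'u, 'e) katlas \<Rightarrow> bool" where
  "filtered A \<longleftrightarrow>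
     (\<forall>J \<in> Iset A. \<forall>I. I \<subseteq> J \<longrightarrow> closedin (cE (aK A J)) (aEE A I J)) \<and>
     (\<forall>J \<in> Iset A. aEE A J J = topspace (cE (aK A J)) \<and>
                   aEE A {} J = czero (aK A J) ` topspace (cU (aK A J))) \<and>
     (\<forall>J \<in> Iset A. \<forall>K \<in> Iset A. \<forall>I. I \<subseteq> J \<and> J \<subset> K \<longrightarrow>
        aPhi A J K ` {e \<in> aEE A I J. cpr (aK A J) e \<in> aUU A J K} =
        aEE A I K \<inter> {e \<in> topspace (cE (aK A K)). cpr (aK A K) e \<in> aphi A J K ` aUU A J K}) \<and>
     (\<forall>J \<in> Iset A. \<forall>I H. I \<subseteq> J \<and> H \<subseteq> J \<longrightarrow> aEE A I J \<inter> aEE A H J = aEE A (I \<inter> H) J) \<and>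
     (\<forall>I \<in> Iset A. \<forall>J \<in> Iset A. I \<subset> J \<longrightarrow>
        openin (subtopology (cU (aK A J))
                  {x \<in> topspace (cU (aK A J)). cs (aK A J) x \<in> aEE A I J})
               (aphi A I J ` aUU A I J))"

definition tame :: "('x, 'u, 'e) katlas \<Rightarrow> bool" where
  "tame A \<longleftrightarrow>
     (\<forall>I \<in> Iset A. \<forall>J \<in> Iset A. \<forall>K \<in> Iset A. I \<subseteq> J \<and> I \<subseteq> K \<longrightarrow>
        UUx A I J \<inter> UUx A I K = UUx A I (J \<union> K)) \<and>
     (\<forall>I \<in> Iset A. \<forall>J \<in> Iset A. \<forall>K \<in> Iset A. I \<subseteq> J \<and> J \<subseteq> K \<longrightarrow>
        phix A I J ` UUx A I K =
        UUx A J K \<inter> {x \<in> topspace (cU (aK A J)). cs (aK A J) x \<in> aEE A I J})"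

definition tame_kur_atlas :: "'x topology \<Rightarrow> ('x, 'u, 'e) katlas \<Rightarrow> bool" where
  "tame_kur_atlas X A \<longleftrightarrow> kur_atlas X A \<and> filtered A \<and> tame A"

section \<open>Virtual neighbourhood |K| (as a set of equivalence classes)\<close>

definition kdom :: "('x, 'u, 'e) katlas \<Rightarrow> (nat set \<times> 'u) set" where
  "kdom A = {(I, x). I \<in> Iset A \<and> x \<in> topspace (cU (aK A I))}"

definition kgen :: "('x, 'u, 'e) katlas \<Rightarrow> ((nat set \<times> 'u) \<times> (nat set \<times> 'u)) set" where
  "kgen A = {((I, x), (J, phix A I J x)) | I J x.
               I \<in> Iset A \<and> J \<in> Iset A \<and> I \<subseteq> J \<and> x \<in> UUx A I J}"

definition kequiv :: "('x, 'u, 'e) katlas \<Rightarrow> ((nat set \<times> 'u) \<times> (nat set \<times> 'u)) set" where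
  "kequiv A = (kgen A \<union> (kgen A)\<inverse>)\<^sup>*"

definition virt_nbhd :: "('x, 'u, 'e) katlas \<Rightarrow> (nat set \<times> 'u) set set" where
  "virt_nbhd A = kdom A // kequiv A"

definition piK :: "('x, 'u, 'e) katlas \<Rightarrow> nat set \<times> 'u \<Rightarrow> (nat set \<times> 'u) set" where
  "piK A p = kequiv A `` {p}"

definition piK_img :: "('x, 'u, 'e) katlas \<Rightarrow> nat set \<Rightarrow> 'u set \<Rightarrow> (nat set \<times> 'u) set set" where
  "piK_img A I S = (\<lambda>x. piK A (I, x)) ` S"

definition iotaX :: "('x, 'u, 'e) katlas \<Rightarrow> (nat set \<times> 'u) set set" where
  "iotaX A = piK A ` {(I, x). I \<in> Iset A \<and> x \<in> zeroset (aK A I)}"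

definition is_reduction :: "('x, 'u, 'e) katlas \<Rightarrow> (nat set \<Rightarrow> 'u set) \<Rightarrow> bool" where
  "is_reduction A V \<longleftrightarrow>
     (\<forall>I \<in> Iset A.
        openin (cU (aK A I)) (V I) \<and>
        compactin (cU (aK A I)) ((cU (aK A I)) closure_of (V I)) \<and>
        (V I \<noteq> {} \<longrightarrow> V I \<inter> zeroset (aK A I) \<noteq> {})) \<and>
     (\<forall>I \<in> Iset A. \<forall>J \<in> Iset A.
        piK_img A I ((cU (aK A I)) closure_of (V I)) \<inter>
        piK_img A J ((cU (aK A J)) closure_of (V J)) \<noteq> {} \<longrightarrow> I \<subseteq> J \<or> J \<subseteq> I) \<and>
     iotaX A \<subseteq> (\<Union>I \<in> Iset A. piK_img A I (V I))"

end

theory Submission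
  imports Defs
begin


lemma lc_nbhd:
  assumes lc: "locally_compact_space Y" and H: "Hausdorff_space Y" and C: "compactin Y C"
    and G: "openin Y G" and CG: "C \<subseteq> G"
  obtains W where "openin Y W" "C \<subseteq> W" "Y closure_of W \<subseteq> G" "compactin Y (Y closure_of W)"
proof -
  have reg: "regular_space Y" using lc H locally_compact_Hausdorff_imp_regular_space by blast
  obtain U L where UL: "openin Y U" "compactin Y L" "closedin Y L" "C \<subseteq> U" "U \<subseteq> L"
    using lc C locally_compact_space_compact_closed_compact[of Y] H by blast
  have "closedin Y (topspace Y - (G \<inter> U))" using G UL(1) by blast
  moreover have "disjnt C (topspace Y - (G \<inter> U))" using CG UL(4) by (auto simp: disjnt_def)
  ultimately obtain W V where WV: "openin Y W" "openin Y V" "C \<subseteq> W" "topspace Y - (G \<inter> U) \<subseteq> V" "disjnt W V"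
    using regular_space_compact_closed_separation[OF reg C] by metis
  have "W \<subseteq> topspace Y - V" using WV(1,5) openin_subset by (auto simp: disjnt_def)
  moreover have "closedin Y (topspace Y - V)" using WV(2) by blast
  ultimately have cl: "Y closure_of W \<subseteq> topspace Y - V" by (meson closure_of_minimal)
  hence clGU: "Y closure_of W \<subseteq> G \<inter> U" using WV(4) by blast
  have "compactin Y (Y closure_of W)"
    using closed_compactin[OF UL(2), of "Y closure_of W"] clGU UL(5) by auto
  then show ?thesis using that WV clGU by blast
qed

lemma pair_sep:
  assumes lc1: "locally_compact_space Y1" and H1: "Hausdorff_space Y1"
    and lc2: "locally_compact_space Y2" and H2: "Hausdorff_space Y2"
    and C1: "compactin Y1 C1" and C2: "compactin Y2 C2"
    and M: "closedin (prod_topology Y1 Y2) M" and dis: "(C1 \<times> C2) \<inter> M = {}"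
  shows "\<exists>W1 W2. openin Y1 W1 \<and> openin Y2 W2 \<and> C1 \<subseteq> W1 \<and> C2 \<subseteq> W2 \<and>
     compactin Y1 (Y1 closure_of W1) \<and> compactin Y2 (Y2 closure_of W2) \<and>
     ((Y1 closure_of W1) \<times> (Y2 closure_of W2)) \<inter> M = {}"
proof -
  have op: "openin (prod_topology Y1 Y2) (topspace (prod_topology Y1 Y2) - M)" using M by blast
  have sub: "C1 \<times> C2 \<subseteq> topspace (prod_topology Y1 Y2) - M"
    using dis compactin_subset_topspace[OF C1] compactin_subset_topspace[OF C2] by auto
  obtain A1 A2 where A: "openin Y1 A1" "openin Y2 A2" "C1 \<subseteq> A1" "C2 \<subseteq> A2"
     "A1 \<times> A2 \<subseteq> topspace (prod_topology Y1 Y2) - M"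
    using Wallace_theorem_prod_topology[OF C1 C2 op sub] by metis
  obtain W1 where W1: "openin Y1 W1" "C1 \<subseteq> W1" "Y1 closure_of W1 \<subseteq> A1" "compactin Y1 (Y1 closure_of W1)"
    using lc_nbhd[OF lc1 H1 C1 A(1,3)] by metis
  obtain W2 where W2: "openin Y2 W2" "C2 \<subseteq> W2" "Y2 closure_of W2 \<subseteq> A2" "compactin Y2 (Y2 closure_of W2)"
    using lc_nbhd[OF lc2 H2 C2 A(2,4)] by metis
  have "((Y1 closure_of W1) \<times> (Y2 closure_of W2)) \<subseteq> A1 \<times> A2" using W1 W2 by auto
  then have "((Y1 closure_of W1) \<times> (Y2 closure_of W2)) \<inter> M = {}" using A(5) by blast
  then show ?thesis using W1 W2 by blast
qed

lemma closed_pair_img: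
  assumes HZ: "Hausdorff_space Z"
    and f: "embedding_map (subtopology Z P) Y1 f" and g: "embedding_map (subtopology Z Q) Y2 g"
    and cf: "closedin Y1 (f ` P)" and cg: "closedin Y2 (g ` Q)"
    and P: "P \<subseteq> topspace Z" and Q: "Q \<subseteq> topspace Z"
  shows "closedin (prod_topology Y1 Y2) {(f z, g z) | z. z \<in> P \<inter> Q}"
proof -
  let ?M = "{(f z, g z) | z. z \<in> P \<inter> Q}"
  have tP: "topspace (subtopology Z P) = P" using P by auto
  have tQ: "topspace (subtopology Z Q) = Q" using Q by auto
  have hf: "homeomorphic_map (subtopology Z P) (subtopology Y1 (f ` P)) f"
    using f tP by (simp add: embedding_map_def)
  have hg: "homeomorphic_map (subtopology Z Q) (subtopology Y2 (g ` Q)) g"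
    using g tQ by (simp add: embedding_map_def)
  have injf: "inj_on f P" using homeomorphic_imp_injective_map[OF hf] tP by simp
  have injg: "inj_on g Q" using homeomorphic_imp_injective_map[OF hg] tQ by simp
  have fP: "f ` P \<subseteq> topspace Y1" using closedin_subset[OF cf] .
  have gQ: "g ` Q \<subseteq> topspace Y2" using closedin_subset[OF cg] .
  have Msub: "?M \<subseteq> topspace (prod_topology Y1 Y2)" using fP gQ by auto
  have "openin (prod_topology Y1 Y2) (topspace (prod_topology Y1 Y2) - ?M)"
    unfolding openin_prod_topology_alt
  proof (intro allI impI)
    fix a b assume ab: "(a, b) \<in> topspace (prod_topology Y1 Y2) - ?M"
    then have a: "a \<in> topspace Y1" and b: "b \<in> topspace Y2" by auto
    show "\<exists>U V. openin Y1 U \<and> openin Y2 V \<and> a \<in> U \<and> b \<in> V \<and> U \<times> V \<subseteq> topspace (prod_topology Y1 Y2) - ?M"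
    proof (cases "a \<in> f ` P")
      case False
      show ?thesis
        apply (rule exI[of _ "topspace Y1 - f ` P"], rule exI[of _ "topspace Y2"])
        using False a b cf by auto
    next
      case aP: True
      show ?thesis
      proof (cases "b \<in> g ` Q")
        case False
        show ?thesis
          apply (rule exI[of _ "topspace Y1"], rule exI[of _ "topspace Y2 - g ` Q"])
          using False a b cg by auto
      next
        case bQ: True
        obtain p where p: "p \<in> P" "a = f p" using aP by blast
        obtain q where q: "q \<in> Q" "b = g q" using bQ by blast
        have "p \<noteq> q"
        proof
          assume "p = q"
          then have "(a, b) \<in> ?M" using p q by blast
          then show False using ab by blast
        qed
        moreover have "p \<in> topspace Z" "q \<in> topspace Z" using P Q p q by auto
        ultimately obtain A B where AB: "openin Z A" "openin Z B" "p \<in> A" "q \<in> B" "disjnt A B"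
          using HZ unfolding Hausdorff_space_def by metis
        have "openin (subtopology Z P) (A \<inter> P)" using AB(1) by (simp add: openin_subtopology_Int)
        then have "openin (subtopology Y1 (f ` P)) (f ` (A \<inter> P))"
          using homeomorphic_map_openness[OF hf, of "A \<inter> P"] tP by auto
        then obtain O1 where O1: "openin Y1 O1" "f ` (A \<inter> P) = O1 \<inter> f ` P"
          by (auto simp: openin_subtopology)
        have "openin (subtopology Z Q) (B \<inter> Q)" using AB(2) by (simp add: openin_subtopology_Int)
        then have "openin (subtopology Y2 (g ` Q)) (g ` (B \<inter> Q))"
          using homeomorphic_map_openness[OF hg, of "B \<inter> Q"] tQ by auto
        then obtain O2 where O2: "openin Y2 O2" "g ` (B \<inter> Q) = O2 \<inter> g ` Q"
          by (auto simp: openin_subtopology)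
        have aO: "a \<in> O1" using O1(2) p AB(3) by blast
        have bO: "b \<in> O2" using O2(2) q AB(4) by blast
        have "O1 \<times> O2 \<subseteq> topspace (prod_topology Y1 Y2) - ?M"
        proof (rule subsetI)
          fix uv assume uvin: "uv \<in> O1 \<times> O2"
          obtain u v where uvd: "uv = (u, v)" by (cases uv)
          have uv: "u \<in> O1" "v \<in> O2" using uvin uvd by auto
          have t1: "u \<in> topspace Y1" using uv(1) O1(1) openin_subset by blast
          have t2: "v \<in> topspace Y2" using uv(2) O2(1) openin_subset by blast
          have nM: "(u, v) \<notin> ?M"
          proof
            assume "(u, v) \<in> ?M"
            then obtain z where z: "z \<in> P" "z \<in> Q" "u = f z" "v = g z" by blast
            then have "f z \<in> f ` (A \<inter> P)" using O1(2) uv by blast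
            then obtain z1 where z1: "z1 \<in> A \<inter> P" "f z = f z1" by blast
            then have zA: "z \<in> A" using injf z(1) unfolding inj_on_def by blast
            have "g z \<in> g ` (B \<inter> Q)" using O2(2) uv z by blast
            then obtain z2 where z2: "z2 \<in> B \<inter> Q" "g z = g z2" by blast
            then have zB: "z \<in> B" using injg z(2) unfolding inj_on_def by blast
            show False using zA zB AB(5) by (auto simp: disjnt_def)
          qed
          show "uv \<in> topspace (prod_topology Y1 Y2) - ?M" using t1 t2 nM uvd by simp
        qed
        then show ?thesis using O1(1) O2(1) aO bO by blast
      qed
    qed
  qed
  then show ?thesis using Msub by (simp add: closedin_def)
qed




lemma embedding_basic:
  assumes "embedding_map X Y f"
  shows "inj_on f (topspace X)" "f ` topspace X \<subseteq> topspace Y"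
proof -
  have h: "homeomorphic_map X (subtopology Y (f ` topspace X)) f" using assms by (simp add: embedding_map_def)
  show "inj_on f (topspace X)" using homeomorphic_imp_injective_map[OF h] .
  have "f ` topspace X = topspace (subtopology Y (f ` topspace X))"
    using homeomorphic_imp_surjective_map[OF h] .
  then show "f ` topspace X \<subseteq> topspace Y" by (metis Int_lower1 topspace_subtopology)
qed

locale tka =
  fixes X :: "'x topology" and A :: "('x, 'u, 'e) katlas"
  assumes cX: "compact_space X" and mX: "metrizable_space X" and tk: "tame_kur_atlas X A"
begin

abbreviation "Iz \<equiv> Iset A"
abbreviation "TU I \<equiv> topspace (cU (aK A I))"
abbreviation "FP I \<equiv> cF (aK A I)"
abbreviation "ZS I \<equiv> zeroset (aK A I)"
abbreviation "ss I \<equiv> cs (aK A I)"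
abbreviation "zz I \<equiv> czero (aK A I)"
abbreviation "pp I \<equiv> cpr (aK A I)"
abbreviation "psi I \<equiv> cpsi (aK A I)"

lemma td: "transition_data X A" and coc: "cocycle A" and wc: "weak_cocycle A"
  and filt: "filtered A" and tm: "tame A"
  using tk by (auto simp: tame_kur_atlas_def kur_atlas_def cocycle_def)

lemma Iset_iff: "I \<in> Iz \<longleftrightarrow> I \<noteq> {} \<and> I \<subseteq> {1..aN A} \<and> (\<Inter>i\<in>I. FP {i}) \<noteq> {}"
  by (simp add: Iset_def)

lemma finite_Iset: "finite Iz"
proof -
  have "Iz \<subseteq> Pow {1..aN A}" by (auto simp: Iset_def)
  then show ?thesis by (rule finite_subset) simp
qed

lemma Iset_fin: "I \<in> Iz \<Longrightarrow> finite I"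
  by (auto simp: Iset_def intro: finite_subset)

lemma chart: assumes "I \<in> Iz" shows "is_kchart X (aK A I)" "FP I = (\<Inter>i\<in>I. FP {i})"
proof -
  have fin: "finite I" and ne: "I \<noteq> {}" using assms Iset_fin by (auto simp: Iset_def)
  have "is_kchart X (aK A I) \<and> FP I = (\<Inter>i\<in>I. FP {i})"
  proof (cases "card I \<ge> 2")
    case True
    then show ?thesis using td assms by (simp add: transition_data_def)
  next
    case False
    have "card I > 0" using fin ne by (simp add: card_gt_0_iff)
    then have "card I = 1" using False by linarith
    then obtain i where i: "I = {i}" by (metis card_1_singletonE)
    then have "i \<in> {1..aN A}" using assms by (auto simp: Iset_def)
    then show ?thesis using td i by (simp add: transition_data_def)
  qed
  then show "is_kchart X (aK A I)" "FP I = (\<Inter>i\<in>I. FP {i})" by auto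
qed

lemma Iset_down: "I \<in> Iz \<Longrightarrow> H \<subseteq> I \<Longrightarrow> H \<noteq> {} \<Longrightarrow> H \<in> Iz"
  unfolding Iset_def by blast

lemma Iset_union: assumes "I \<in> Iz" "J \<in> Iz" "p \<in> FP I" "p \<in> FP J" shows "I \<union> J \<in> Iz"
proof -
  have "p \<in> (\<Inter>i\<in>I \<union> J. FP {i})" using chart(2)[OF assms(1)] chart(2)[OF assms(2)] assms(3,4) by auto
  moreover have "I \<union> J \<noteq> {}" using assms(1) by (simp add: Iset_iff)
  moreover have "I \<union> J \<subseteq> {1..aN A}" using assms(1,2) by (simp add: Iset_iff)
  ultimately show ?thesis unfolding Iset_iff by blast
qed

lemma FP_sub: assumes "I \<in> Iz" shows "FP I \<subseteq> topspace X"
proof -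
  have "openin X (FP I)" using chart(1)[OF assms] by (simp add: is_kchart_def)
  then show ?thesis by (rule openin_subset)
qed

lemma ZS_sub: "ZS I \<subseteq> TU I" by (auto simp: zeroset_def)

lemma chartfacts: assumes "I \<in> Iz"
  shows "Hausdorff_space (cU (aK A I))" "Hausdorff_space (cE (aK A I))"
    "locally_compact_space (cU (aK A I))"
    "continuous_map (cU (aK A I)) (cE (aK A I)) (ss I)"
    "continuous_map (cU (aK A I)) (cE (aK A I)) (zz I)"
    "\<And>x. x \<in> TU I \<Longrightarrow> pp I (zz I x) = x"
    "\<And>x. x \<in> TU I \<Longrightarrow> pp I (ss I x) = x"
    "homeomorphic_map (subtopology (cU (aK A I)) (ZS I)) (subtopology X (FP I)) (psi I)"
    "openin X (FP I)"
proof -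
  have k: "is_kchart X (aK A I)" using chart(1)[OF assms] .
  then have mU: "metrizable_space (cU (aK A I))" and mE: "metrizable_space (cE (aK A I))"
    by (simp_all add: is_kchart_def)
  show "Hausdorff_space (cU (aK A I))" using mU metrizable_imp_Hausdorff_space by blast
  show "Hausdorff_space (cE (aK A I))" using mE metrizable_imp_Hausdorff_space by blast
  show "locally_compact_space (cU (aK A I))"
    "continuous_map (cU (aK A I)) (cE (aK A I)) (ss I)"
    "continuous_map (cU (aK A I)) (cE (aK A I)) (zz I)"
    "homeomorphic_map (subtopology (cU (aK A I)) (ZS I)) (subtopology X (FP I)) (psi I)"
    "openin X (FP I)" using k by (simp_all add: is_kchart_def)
  show "\<And>x. x \<in> TU I \<Longrightarrow> pp I (zz I x) = x" "\<And>x. x \<in> TU I \<Longrightarrow> pp I (ss I x) = x"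
    using k by (simp_all add: is_kchart_def)
qed

lemma psi_img: assumes "I \<in> Iz" shows "psi I ` ZS I = FP I" "inj_on (psi I) (ZS I)"
proof -
  have h: "homeomorphic_map (subtopology (cU (aK A I)) (ZS I)) (subtopology X (FP I)) (psi I)"
    using chartfacts(8)[OF assms] .
  have t1: "topspace (subtopology (cU (aK A I)) (ZS I)) = ZS I" using ZS_sub by auto
  have t2: "topspace (subtopology X (FP I)) = FP I" using FP_sub[OF assms] by auto
  show "psi I ` ZS I = FP I" using homeomorphic_imp_surjective_map[OF h] t1 t2 by simp
  show "inj_on (psi I) (ZS I)" using homeomorphic_imp_injective_map[OF h] t1 by simp
qed

lemma cc: "I \<in> Iz \<Longrightarrow> J \<in> Iz \<Longrightarrow> I \<subset> J \<Longrightarrow>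
   is_coord_change (aK A I) (aK A J) (aUU A I J) (aPhi A I J) (aphi A I J)"
  using td unfolding transition_data_def by blast

lemma cc_facts: assumes "I \<in> Iz" "J \<in> Iz" "I \<subset> J"
  shows "openin (cU (aK A I)) (aUU A I J)"
   "aUU A I J \<inter> ZS I = {x \<in> ZS I. psi I x \<in> FP I \<inter> FP J}"
   "embedding_map (subtopology (cE (aK A I)) {e \<in> topspace (cE (aK A I)). pp I e \<in> aUU A I J}) (cE (aK A J)) (aPhi A I J)"
   "embedding_map (subtopology (cU (aK A I)) (aUU A I J)) (cU (aK A J)) (aphi A I J)"
   "\<And>x. x \<in> aUU A I J \<Longrightarrow> zz J (aphi A I J x) = aPhi A I J (zz I x)"
   "\<And>x. x \<in> aUU A I J \<Longrightarrow> ss J (aphi A I J x) = aPhi A I J (ss I x)"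
   "\<And>x. x \<in> aUU A I J \<Longrightarrow> x \<in> ZS I \<Longrightarrow> aphi A I J x = inv_into (ZS J) (psi J) (psi I x)"
proof -
  note h = cc[OF assms, unfolded is_coord_change_def]
  show "openin (cU (aK A I)) (aUU A I J)" using h by (rule conjunct1)
  show "aUU A I J \<inter> ZS I = {x \<in> ZS I. psi I x \<in> FP I \<inter> FP J}"
    using h[THEN conjunct2, THEN conjunct1] .
  show "embedding_map (subtopology (cE (aK A I)) {e \<in> topspace (cE (aK A I)). pp I e \<in> aUU A I J}) (cE (aK A J)) (aPhi A I J)"
    using h[THEN conjunct2, THEN conjunct2, THEN conjunct1] .
  show "embedding_map (subtopology (cU (aK A I)) (aUU A I J)) (cU (aK A J)) (aphi A I J)"
    using h[THEN conjunct2, THEN conjunct2, THEN conjunct2, THEN conjunct1] .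
  note h5 = h[THEN conjunct2, THEN conjunct2, THEN conjunct2, THEN conjunct2, THEN conjunct2]
  show "\<And>x. x \<in> aUU A I J \<Longrightarrow> zz J (aphi A I J x) = aPhi A I J (zz I x)"
    using h5[THEN conjunct1] by blast
  show "\<And>x. x \<in> aUU A I J \<Longrightarrow> ss J (aphi A I J x) = aPhi A I J (ss I x)"
    using h5[THEN conjunct2, THEN conjunct1] by blast
  show "\<And>x. x \<in> aUU A I J \<Longrightarrow> x \<in> ZS I \<Longrightarrow> aphi A I J x = inv_into (ZS J) (psi J) (psi I x)"
    using h5[THEN conjunct2, THEN conjunct2] by blast
qed

lemma UU_eq: "J \<in> Iz \<Longrightarrow> I \<noteq> J \<Longrightarrow> UUx A I J = aUU A I J" by (simp add: UUx_def)
lemma UU_refl: "I \<in> Iz \<Longrightarrow> UUx A I I = TU I" by (simp add: UUx_def)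
lemma UU_notin: "J \<notin> Iz \<Longrightarrow> UUx A I J = {}" by (simp add: UUx_def)
lemma ph_refl: "phix A I I = id" by (simp add: phix_def)
lemma ph_eq: "I \<noteq> J \<Longrightarrow> phix A I J = aphi A I J" by (simp add: phix_def)

lemma UU_sub: assumes "I \<in> Iz" "J \<in> Iz" "I \<subseteq> J" shows "UUx A I J \<subseteq> TU I"
proof (cases "I = J")
  case True then show ?thesis using assms by (simp add: UU_refl)
next
  case False
  then have "I \<subset> J" using assms by blast
  then show ?thesis using cc_facts(1)[OF assms(1,2)] openin_subset UU_eq[OF assms(2) False] by metis
qed

lemma ph_in: assumes "I \<in> Iz" "J \<in> Iz" "I \<subseteq> J" "x \<in> UUx A I J" shows "phix A I J x \<in> TU J"
proof (cases "I = J")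
  case True then show ?thesis using assms by (simp add: UU_refl ph_refl)
next
  case False
  then have s: "I \<subset> J" using assms by blast
  have "x \<in> topspace (subtopology (cU (aK A I)) (aUU A I J))"
    using assms(4) UU_sub[OF assms(1-3)] UU_eq[OF assms(2) False] by auto
  then show ?thesis using embedding_basic(2)[OF cc_facts(4)[OF assms(1,2) s]] ph_eq[OF False] by auto
qed

lemma ph_inj: assumes "I \<in> Iz" "J \<in> Iz" "I \<subseteq> J" shows "inj_on (phix A I J) (UUx A I J)"
proof (cases "I = J")
  case True then show ?thesis by (simp add: ph_refl)
next
  case False
  then have s: "I \<subset> J" using assms by blast
  have "topspace (subtopology (cU (aK A I)) (aUU A I J)) = UUx A I J"
    using UU_sub[OF assms(1-3)] UU_eq[OF assms(2) False] by auto
  then show ?thesis using embedding_basic(1)[OF cc_facts(4)[OF assms(1,2) s]] ph_eq[OF False] by simp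
qed

lemma ph_zero1: assumes "I \<in> Iz" "J \<in> Iz" "I \<subseteq> J" "x \<in> UUx A I J" "x \<in> ZS I"
  shows "phix A I J x \<in> ZS J" "psi J (phix A I J x) = psi I x"
proof -
  have "phix A I J x \<in> ZS J \<and> psi J (phix A I J x) = psi I x"
  proof (cases "I = J")
    case True then show ?thesis using assms by (simp add: ph_refl)
  next
    case False
    then have s: "I \<subset> J" using assms by blast
    have xa: "x \<in> aUU A I J" using assms(4) UU_eq[OF assms(2) False] by simp
    have "psi I x \<in> FP J" using cc_facts(2)[OF assms(1,2) s] xa assms(5) by blast
    then have p: "psi I x \<in> psi J ` ZS J" using psi_img(1)[OF assms(2)] by simp
    have e: "phix A I J x = inv_into (ZS J) (psi J) (psi I x)"
      using cc_facts(7)[OF assms(1,2) s xa assms(5)] ph_eq[OF False] by simp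
    show ?thesis unfolding e using p by (simp add: inv_into_into f_inv_into_f)
  qed
  then show "phix A I J x \<in> ZS J" "psi J (phix A I J x) = psi I x" by auto
qed

lemma ph_zero2: assumes "I \<in> Iz" "J \<in> Iz" "I \<subseteq> J" "x \<in> UUx A I J" "phix A I J x \<in> ZS J"
  shows "x \<in> ZS I"
proof (cases "I = J")
  case True then show ?thesis using assms by (simp add: ph_refl)
next
  case False
  then have s: "I \<subset> J" using assms by blast
  have xa: "x \<in> aUU A I J" using assms(4) UU_eq[OF assms(2) False] by simp
  have xT: "x \<in> TU I" using assms(4) UU_sub[OF assms(1-3)] by blast
  let ?y = "aphi A I J x"
  have "ss J ?y = zz J ?y" using assms(5) ph_eq[OF False] by (simp add: zeroset_def)
  then have eq: "aPhi A I J (ss I x) = aPhi A I J (zz I x)"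
    using cc_facts(5,6)[OF assms(1,2) s xa] by simp
  have inj: "inj_on (aPhi A I J) {e \<in> topspace (cE (aK A I)). pp I e \<in> aUU A I J}"
    using embedding_basic(1)[OF cc_facts(3)[OF assms(1,2) s]] by (simp add: Int_absorb1)
  have "ss I x \<in> topspace (cE (aK A I))"
    using continuous_map_image_subset_topspace[OF chartfacts(4)[OF assms(1)]] xT by blast
  moreover have "zz I x \<in> topspace (cE (aK A I))"
    using continuous_map_image_subset_topspace[OF chartfacts(5)[OF assms(1)]] xT by blast
  moreover have "pp I (ss I x) = x" "pp I (zz I x) = x" using chartfacts(6,7)[OF assms(1) xT] by auto
  ultimately have "ss I x = zz I x" using inj eq xa unfolding inj_on_def by auto
  then show ?thesis using xT by (simp add: zeroset_def)
qed

lemma comp: assumes "I \<in> Iz" "J \<in> Iz" "K \<in> Iz" "I \<subseteq> J" "J \<subseteq> K"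
    "x \<in> UUx A I J" "phix A I J x \<in> UUx A J K"
  shows "x \<in> UUx A I K" "phix A J K (phix A I J x) = phix A I K x"
proof -
  have "x \<in> UUx A I K \<and> phix A J K (phix A I J x) = phix A I K x"
  proof (cases "I = J")
    case True then show ?thesis using assms by (simp add: ph_refl)
  next
    case IJ: False
    show ?thesis
    proof (cases "J = K")
      case True then show ?thesis using assms by (simp add: ph_refl)
    next
      case JK: False
      have IK: "I \<noteq> K" using IJ JK assms(4,5) by blast
      have sIJ: "I \<subset> J" and sJK: "J \<subset> K" and sIK: "I \<subset> K" using IJ JK IK assms(4,5) by auto
      have xa: "x \<in> aUU A I J" using assms(6) UU_eq[OF assms(2) IJ] by simp
      have ya: "aphi A I J x \<in> aUU A J K" using assms(7) UU_eq[OF assms(3) JK] ph_eq[OF IJ] by simp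
      have xUUU: "x \<in> UUU A I J K" using xa ya by (simp add: UUU_def)
      have "UUU A I J K \<subseteq> aUU A I K"
        using coc[unfolded cocycle_def, THEN conjunct2, rule_format, OF assms(1,2,3) conjI[OF sIJ sJK]] .
      then have xIK: "x \<in> aUU A I K" using xUUU by blast
      have xT: "x \<in> TU I" using assms(6) UU_sub[OF assms(1,2,4)] by blast
      have ez: "zz I x \<in> topspace (cE (aK A I))"
        using continuous_map_image_subset_topspace[OF chartfacts(5)[OF assms(1)]] xT by blast
      have pz: "pp I (zz I x) = x" using chartfacts(6)[OF assms(1) xT] .
      have "aPhi A J K (aPhi A I J (zz I x)) = aPhi A I K (zz I x)"
        using wc[unfolded weak_cocycle_def, rule_format, OF assms(1,2,3) conjI[OF sIJ sJK] ez] pz xUUU xIK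
        by simp
      then have "zz K (aphi A J K (aphi A I J x)) = zz K (aphi A I K x)"
        using cc_facts(5)[OF assms(1,2) sIJ xa] cc_facts(5)[OF assms(2,3) sJK ya]
          cc_facts(5)[OF assms(1,3) sIK xIK] by simp
      moreover have "aphi A J K (aphi A I J x) \<in> TU K"
        using ph_in[OF assms(2,3,5), of "aphi A I J x"] ya UU_eq[OF assms(3) JK] ph_eq[OF JK] by simp
      moreover have "aphi A I K x \<in> TU K"
        using ph_in[OF assms(1,3), of x] assms(4,5) xIK UU_eq[OF assms(3) IK] ph_eq[OF IK] by auto
      ultimately have "aphi A J K (aphi A I J x) = aphi A I K x"
        using chartfacts(6)[OF assms(3)] by metis
      then show ?thesis using xIK UU_eq[OF assms(3) IK] ph_eq[OF IK] ph_eq[OF IJ] ph_eq[OF JK] by simp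
    qed
  qed
  then show "x \<in> UUx A I K" "phix A J K (phix A I J x) = phix A I K x" by auto
qed

lemma tame1: "I \<in> Iz \<Longrightarrow> J \<in> Iz \<Longrightarrow> K \<in> Iz \<Longrightarrow> I \<subseteq> J \<Longrightarrow> I \<subseteq> K \<Longrightarrow>
   UUx A I J \<inter> UUx A I K = UUx A I (J \<union> K)"
  using tm[unfolded tame_def, THEN conjunct1] by blast

lemma tame2: "I \<in> Iz \<Longrightarrow> J \<in> Iz \<Longrightarrow> K \<in> Iz \<Longrightarrow> I \<subseteq> J \<Longrightarrow> J \<subseteq> K \<Longrightarrow>
   phix A I J ` UUx A I K = UUx A J K \<inter> {x \<in> TU J. ss J x \<in> aEE A I J}"
  using tm[unfolded tame_def, THEN conjunct2] by blast

lemma EE_closed: "J \<in> Iz \<Longrightarrow> I \<subseteq> J \<Longrightarrow> closedin (cE (aK A J)) (aEE A I J)"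
  using filt[unfolded filtered_def, THEN conjunct1] by blast
lemma EE_empty: "J \<in> Iz \<Longrightarrow> aEE A {} J = zz J ` TU J"
  using filt[unfolded filtered_def, THEN conjunct2, THEN conjunct1] by blast
lemma EE_int: "J \<in> Iz \<Longrightarrow> I \<subseteq> J \<Longrightarrow> H \<subseteq> J \<Longrightarrow> aEE A I J \<inter> aEE A H J = aEE A (I \<inter> H) J"
  using filt[unfolded filtered_def, THEN conjunct2, THEN conjunct2, THEN conjunct2, THEN conjunct1] by blast

definition Rel where "Rel I x J y \<longleftrightarrow> I \<in> Iz \<and> J \<in> Iz \<and> x \<in> TU I \<and> y \<in> TU J \<and>
   (\<exists>L\<in>Iz. I \<subseteq> L \<and> J \<subseteq> L \<and> x \<in> UUx A I L \<and> y \<in> UUx A J L \<and> phix A I L x = phix A J L y)"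

lemma Rel_refl: "I \<in> Iz \<Longrightarrow> x \<in> TU I \<Longrightarrow> Rel I x I x"
  unfolding Rel_def using UU_refl by blast

lemma Rel_sym: assumes "Rel I x J y" shows "Rel J y I x"
proof -
  obtain L where L: "L \<in> Iz" "I \<subseteq> L" "J \<subseteq> L" "x \<in> UUx A I L" "y \<in> UUx A J L"
      "phix A I L x = phix A J L y" using assms unfolding Rel_def by blast
  have b: "I \<in> Iz" "J \<in> Iz" "x \<in> TU I" "y \<in> TU J" using assms unfolding Rel_def by auto
  show ?thesis unfolding Rel_def using L b by (intro conjI bexI[of _ L]) auto
qed

lemma Rel_gen: assumes "((I, x), (J, y)) \<in> kgen A" shows "Rel I x J y"
proof -
  have h: "I \<in> Iz" "J \<in> Iz" "I \<subseteq> J" "x \<in> UUx A I J" "y = phix A I J x"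
    using assms unfolding kgen_def by auto
  have yT: "y \<in> TU J" using ph_in[OF h(1-4)] h(5) by simp
  have xT: "x \<in> TU I" using UU_sub[OF h(1-3)] h(4) by blast
  show ?thesis unfolding Rel_def
    using h xT yT UU_refl[OF h(2)] ph_refl by (intro conjI bexI[of _ J]) auto
qed

lemma Rel_trans: assumes r1: "Rel I x J y" and r2: "Rel J y K z" shows "Rel I x K z"
proof -
  obtain L1 where L1: "L1 \<in> Iz" "I \<subseteq> L1" "J \<subseteq> L1" "x \<in> UUx A I L1" "y \<in> UUx A J L1"
      "phix A I L1 x = phix A J L1 y" using r1 unfolding Rel_def by blast
  obtain L2 where L2: "L2 \<in> Iz" "J \<subseteq> L2" "K \<subseteq> L2" "y \<in> UUx A J L2" "z \<in> UUx A K L2"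
      "phix A J L2 y = phix A K L2 z" using r2 unfolding Rel_def by blast
  have I: "I \<in> Iz" "x \<in> TU I" and J: "J \<in> Iz" and K: "K \<in> Iz" "z \<in> TU K"
    using r1 r2 unfolding Rel_def by auto
  let ?L = "L1 \<union> L2"
  have "y \<in> UUx A J ?L" using tame1[OF J L1(1) L2(1) L1(3) L2(2)] L1(5) L2(4) by blast
  then have L: "?L \<in> Iz" using UU_notin by fastforce
  have yL: "y \<in> UUx A J ?L" by fact
  have s1: "L1 \<subseteq> ?L" and s2: "L2 \<subseteq> ?L" by auto
  have w1: "phix A J L1 y \<in> UUx A L1 ?L"
    using tame2[OF J L1(1) L L1(3) s1] yL by blast
  have c1: "phix A L1 ?L (phix A J L1 y) = phix A J ?L y"
    using comp(2)[OF J L1(1) L L1(3) s1 L1(5) w1] .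
  have xL: "x \<in> UUx A I ?L" and c2: "phix A L1 ?L (phix A I L1 x) = phix A I ?L x"
    using comp[OF I(1) L1(1) L L1(2) s1 L1(4)] w1 L1(6) by auto
  have w2: "phix A J L2 y \<in> UUx A L2 ?L"
    using tame2[OF J L2(1) L L2(2) s2] yL by blast
  have c3: "phix A L2 ?L (phix A J L2 y) = phix A J ?L y"
    using comp(2)[OF J L2(1) L L2(2) s2 L2(4) w2] .
  have zL: "z \<in> UUx A K ?L" and c4: "phix A L2 ?L (phix A K L2 z) = phix A K ?L z"
    using comp[OF K(1) L2(1) L L2(3) s2 L2(5)] w2 L2(6) by auto
  have "phix A I ?L x = phix A K ?L z" using c1 c2 c3 c4 L1(6) L2(6) by simp
  then show ?thesis unfolding Rel_def using I K L xL zL L1(2) L2(3) by blast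
qed

lemma kequiv_Rel_aux:
  assumes "(p, q) \<in> (kgen A \<union> (kgen A)\<inverse>)\<^sup>*" "I \<in> Iz" "x \<in> TU I" "p = (I, x)"
  shows "Rel I x (fst q) (snd q)"
  using assms(1)
proof (induction rule: rtrancl_induct)
  case base
  then show ?case using assms Rel_refl by simp
next
  case (step q r)
  from step.hyps(2) show ?case
  proof
    assume "(q, r) \<in> kgen A"
    then have "((fst q, snd q), (fst r, snd r)) \<in> kgen A" by simp
    then show ?thesis using Rel_trans[OF step.IH Rel_gen] by blast
  next
    assume "(q, r) \<in> (kgen A)\<inverse>"
    then have "((fst r, snd r), (fst q, snd q)) \<in> kgen A" by simp
    then show ?thesis using Rel_trans[OF step.IH Rel_sym[OF Rel_gen]] by blast
  qed
qed

lemma kequiv_Rel: "((I, x), (J, y)) \<in> kequiv A \<Longrightarrow> I \<in> Iz \<Longrightarrow> x \<in> TU I \<Longrightarrow> Rel I x J y"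
  using kequiv_Rel_aux[of "(I, x)" "(J, y)" I x] unfolding kequiv_def by simp

lemma Rel_common: assumes "Rel I x J y"
  obtains L w where "L \<in> Iz" "I \<subseteq> L" "J \<subseteq> L" "x \<in> UUx A I L" "y \<in> UUx A J L"
    "w = phix A I L x" "w = phix A J L y" "w \<in> TU L" "ss L w \<in> aEE A I L" "ss L w \<in> aEE A J L"
proof -
  obtain L where L: "L \<in> Iz" "I \<subseteq> L" "J \<subseteq> L" "x \<in> UUx A I L" "y \<in> UUx A J L"
      "phix A I L x = phix A J L y" using assms unfolding Rel_def by blast
  have I: "I \<in> Iz" and J: "J \<in> Iz" using assms unfolding Rel_def by auto
  have a: "phix A I L x \<in> UUx A L L \<inter> {x \<in> TU L. ss L x \<in> aEE A I L}"
    using tame2[OF I L(1) L(1) L(2) order_refl] L(4) by blast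
  have b: "phix A J L y \<in> UUx A L L \<inter> {x \<in> TU L. ss L x \<in> aEE A J L}"
    using tame2[OF J L(1) L(1) L(3) order_refl] L(5) by blast
  show ?thesis using that[OF L(1-5) refl] L(6) a b by auto
qed

lemma NF0: assumes r: "Rel I x J y" and d: "I \<inter> J = {}"
  shows "x \<in> ZS I" "y \<in> ZS J" "psi I x = psi J y"
proof -
  have I: "I \<in> Iz" and J: "J \<in> Iz" using r unfolding Rel_def by auto
  obtain L w where L: "L \<in> Iz" "I \<subseteq> L" "J \<subseteq> L" "x \<in> UUx A I L" "y \<in> UUx A J L"
    "w = phix A I L x" "w = phix A J L y" "w \<in> TU L" "ss L w \<in> aEE A I L" "ss L w \<in> aEE A J L"
    using Rel_common[OF r] by metis
  have "ss L w \<in> aEE A {} L" using EE_int[OF L(1) L(2,3)] L(9,10) d by auto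
  then obtain w' where w': "w' \<in> TU L" "ss L w = zz L w'" using EE_empty[OF L(1)] by auto
  have "w = w'" using chartfacts(6,7)[OF L(1)] w' L(8) by metis
  then have wZ: "w \<in> ZS L" using w' L(8) by (simp add: zeroset_def)
  show xZ: "x \<in> ZS I" using ph_zero2[OF I L(1) L(2) L(4)] wZ L(6) by simp
  show yZ: "y \<in> ZS J" using ph_zero2[OF J L(1) L(3) L(5)] wZ L(7) by simp
  have "psi L w = psi I x" using ph_zero1(2)[OF I L(1) L(2) L(4) xZ] L(6) by simp
  moreover have "psi L w = psi J y" using ph_zero1(2)[OF J L(1) L(3) L(5) yZ] L(7) by simp
  ultimately show "psi I x = psi J y" by simp
qed

lemma NF1: assumes r: "Rel I x J y" and H: "H = I \<inter> J" "H \<noteq> {}"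
  shows "\<exists>z. z \<in> UUx A H I \<and> z \<in> UUx A H J \<and> x = phix A H I z \<and> y = phix A H J z"
proof -
  have I: "I \<in> Iz" and J: "J \<in> Iz" using r unfolding Rel_def by auto
  have Hi: "H \<in> Iz" using Iset_down[OF I _ H(2)] H(1) by blast
  obtain L w where L: "L \<in> Iz" "I \<subseteq> L" "J \<subseteq> L" "x \<in> UUx A I L" "y \<in> UUx A J L"
    "w = phix A I L x" "w = phix A J L y" "w \<in> TU L" "ss L w \<in> aEE A I L" "ss L w \<in> aEE A J L"
    using Rel_common[OF r] by metis
  have HI: "H \<subseteq> I" and HJ: "H \<subseteq> J" and HL: "H \<subseteq> L" using H(1) L(2) by auto
  have "ss L w \<in> aEE A H L" using EE_int[OF L(1) L(2,3)] L(9,10) H(1) by auto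
  then have "w \<in> phix A H L ` UUx A H L"
    using tame2[OF Hi L(1) L(1) HL order_refl] L(8) UU_refl[OF L(1)] by blast
  then obtain z where z: "z \<in> UUx A H L" "w = phix A H L z" by blast
  have side: "z \<in> UUx A H I' \<and> phix A H I' z = v" if I': "I' \<in> Iz" "H \<subseteq> I'" "I' \<subseteq> L"
    and v: "v \<in> UUx A I' L" "w = phix A I' L v" for I' v
  proof -
    have "UUx A H I' \<inter> UUx A H L = UUx A H (I' \<union> L)" using tame1[OF Hi I'(1) L(1) I'(2) HL] .
    moreover have "I' \<union> L = L" using I'(3) by blast
    ultimately have e: "UUx A H I' \<inter> UUx A H L = UUx A H L" by simp
    have zI: "z \<in> UUx A H I'" using z(1) e by (metis IntD1)
    have p1: "phix A H I' z \<in> UUx A I' L"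
      using tame2[OF Hi I'(1) L(1) I'(2) I'(3)] imageI[OF z(1), of "phix A H I'"] by (metis IntD1)
    have "phix A I' L (phix A H I' z) = phix A H L z" using comp(2)[OF Hi I'(1) L(1) I'(2) I'(3) zI p1] .
    then have "phix A I' L (phix A H I' z) = phix A I' L v" using z(2) v(2) by simp
    then have "phix A H I' z = v" using ph_inj[OF I'(1) L(1) I'(3)] p1 v(1) unfolding inj_on_def by blast
    then show ?thesis using zI by simp
  qed
  have "z \<in> UUx A H I \<and> phix A H I z = x" using side[OF I HI L(2) L(4) L(6)] .
  moreover have "z \<in> UUx A H J \<and> phix A H J z = y" using side[OF J HJ L(3) L(5) L(7)] .
  ultimately show ?thesis by metis
qed

lemma zero_equiv: assumes I: "I \<in> Iz" and J: "J \<in> Iz" and x: "x \<in> ZS I" and y: "y \<in> ZS J"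
    and e: "psi I x = psi J y"
  shows "((I, x), (J, y)) \<in> kequiv A"
proof -
  let ?L = "I \<union> J"
  have pI: "psi I x \<in> FP I" using psi_img(1)[OF I] x by blast
  have pJ: "psi I x \<in> FP J" using psi_img(1)[OF J] y e by blast
  have L: "?L \<in> Iz" using Iset_union[OF I J pI pJ] .
  have pL: "psi I x \<in> FP ?L" using chart(2)[OF L] chart(2)[OF I] chart(2)[OF J] pI pJ by auto
  have inL: "v \<in> UUx A K ?L" if K: "K \<in> Iz" "K \<subseteq> ?L" "v \<in> ZS K" "psi K v = psi I x" for K v
  proof (cases "K = ?L")
    case True then show ?thesis using K ZS_sub UU_refl[OF L] by auto
  next
    case False
    then have s: "K \<subset> ?L" using K by blast
    have "psi K v \<in> FP K" using psi_img(1)[OF K(1)] K(3) by blast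
    then have "v \<in> {x \<in> ZS K. psi K x \<in> FP K \<inter> FP ?L}" using K(3,4) pL by simp
    then have "v \<in> aUU A K ?L \<inter> ZS K" using cc_facts(2)[OF K(1) L s] by simp
    then have "v \<in> aUU A K ?L" by (rule IntD1)
    then show ?thesis using UU_eq[OF L False] by simp
  qed
  have xL: "x \<in> UUx A I ?L" using inL[OF I _ x refl] by blast
  have yL: "y \<in> UUx A J ?L" using inL[OF J _ y e[symmetric]] by blast
  have g1: "((I, x), (?L, phix A I ?L x)) \<in> kgen A" unfolding kgen_def using I L xL by blast
  have g2: "((J, y), (?L, phix A J ?L y)) \<in> kgen A" unfolding kgen_def using J L yL by blast
  have z1: "phix A I ?L x \<in> ZS ?L" "psi ?L (phix A I ?L x) = psi I x" using ph_zero1[OF I L _ xL x] by auto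
  have z2: "phix A J ?L y \<in> ZS ?L" "psi ?L (phix A J ?L y) = psi J y" using ph_zero1[OF J L _ yL y] by auto
  have "phix A I ?L x = phix A J ?L y" using psi_img(2)[OF L] z1 z2 e unfolding inj_on_def by metis
  then have "((?L, phix A I ?L x), (J, y)) \<in> (kgen A)\<inverse>" using g2 by simp
  then show ?thesis unfolding kequiv_def using g1
    by (meson UnI1 UnI2 r_into_rtrancl rtrancl_trans)
qed

end



lemma shrink:
  assumes cX: "compact_space X" and rX: "regular_space X" and fS: "finite S"
    and op: "\<And>i. i \<in> S \<Longrightarrow> openin X (F i)" and cov: "topspace X \<subseteq> (\<Union>i\<in>S. F i)"
  obtains K where "\<And>i. i \<in> S \<Longrightarrow> closedin X (K i)" "\<And>i. i \<in> S \<Longrightarrow> K i \<subseteq> F i"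
    "topspace X \<subseteq> (\<Union>i\<in>S. K i)"
proof -
  have nb: "neighbourhood_base_of (closedin X) X" using rX neighbourhood_base_of_closedin by blast
  have "\<forall>x\<in>topspace X. \<exists>i U V. i \<in> S \<and> openin X U \<and> closedin X V \<and> x \<in> U \<and> U \<subseteq> V \<and> V \<subseteq> F i"
  proof
    fix x assume x: "x \<in> topspace X"
    then obtain i where i: "i \<in> S" "x \<in> F i" using cov by blast
    then obtain U V where "openin X U" "closedin X V" "x \<in> U" "U \<subseteq> V" "V \<subseteq> F i"
      using nb op[OF i(1)] unfolding neighbourhood_base_of by metis
    then show "\<exists>i U V. i \<in> S \<and> openin X U \<and> closedin X V \<and> x \<in> U \<and> U \<subseteq> V \<and> V \<subseteq> F i"
      using i by blast
  qed
  then obtain ix U V where UV: "\<And>x. x \<in> topspace X \<Longrightarrow> ix x \<in> S \<and> openin X (U x) \<and> closedin X (V x)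
        \<and> x \<in> U x \<and> U x \<subseteq> V x \<and> V x \<subseteq> F (ix x)" by metis
  have "(\<forall>W\<in>U ` topspace X. openin X W) \<and> topspace X \<subseteq> \<Union>(U ` topspace X)" using UV by blast
  then obtain FF where FF: "finite FF" "FF \<subseteq> U ` topspace X" "topspace X \<subseteq> \<Union>FF"
    using cX unfolding compact_space_alt by meson
  then obtain T where T: "T \<subseteq> topspace X" "finite T" "FF = U ` T" using finite_subset_image by metis
  define K where "K i = \<Union>(V ` {x\<in>T. ix x = i})" for i
  show thesis
  proof (rule that)
    fix i assume "i \<in> S"
    show "closedin X (K i)" unfolding K_def
      by (rule closedin_Union) (use T UV in auto)
    show "K i \<subseteq> F i" unfolding K_def using T UV by fastforce
  next
    show "topspace X \<subseteq> (\<Union>i\<in>S. K i)"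
    proof
      fix y assume y: "y \<in> topspace X"
      then obtain x where x: "x \<in> T" "y \<in> U x" using FF T by blast
      then have "y \<in> V x" "ix x \<in> S" using UV T by blast+
      then show "y \<in> (\<Union>i\<in>S. K i)" unfolding K_def using x by blast
    qed
  qed
qed

context tka begin

definition lam :: "nat \<Rightarrow> real" where "lam k = (real (aN A) + 1 - real k) / (real (aN A) + 1)"
definition mu :: "nat \<Rightarrow> real" where "mu k = (real (aN A) - real k) / (real (aN A) + 1)"
definition Dset where "Dset f I = {x \<in> topspace X. (\<forall>i\<in>I. lam (card I) \<le> f i x) \<and>
   (\<forall>j\<in>{1..aN A} - I. f j x \<le> mu (card I))}"

lemma lam_mu: "mu k < lam k" "mu k = lam (Suc k)" "k \<le> k' \<Longrightarrow> mu k' \<le> mu k"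
   "k \<le> aN A \<Longrightarrow> 0 < lam k" "lam 1 \<le> 1"
proof -
  have p: "real (aN A) + 1 > 0" by simp
  show "mu k < lam k" unfolding lam_def mu_def using p by (simp add: divide_strict_right_mono)
  show "mu k = lam (Suc k)" unfolding lam_def mu_def by simp
  show "k \<le> k' \<Longrightarrow> mu k' \<le> mu k" unfolding mu_def using p by (simp add: divide_right_mono)
  show "k \<le> aN A \<Longrightarrow> 0 < lam k" unfolding lam_def using p by simp
  show "lam 1 \<le> 1" unfolding lam_def using p by simp
qed

lemma Dset_closed: assumes f: "\<And>i. i \<in> {1..aN A} \<Longrightarrow> continuous_map X euclideanreal (f i)"
  and I: "I \<subseteq> {1..aN A}" shows "closedin X (Dset f I)"
proof -
  let ?G = "insert (topspace X) ((\<lambda>i. {x\<in>topspace X. f i x \<in> {lam (card I)..}}) ` I \<union>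
       (\<lambda>j. {x\<in>topspace X. f j x \<in> {..mu (card I)}}) ` ({1..aN A} - I))"
  have eq: "Dset f I = \<Inter>?G" unfolding Dset_def by auto
  have c1: "closedin X {x\<in>topspace X. f i x \<in> {c..}}" if "i \<in> {1..aN A}" for i c
    using closedin_continuous_map_preimage[OF f[OF that], of "{c..}"] by simp
  have c2: "closedin X {x\<in>topspace X. f i x \<in> {..c}}" if "i \<in> {1..aN A}" for i c
    using closedin_continuous_map_preimage[OF f[OF that], of "{..c}"] by simp
  have "closedin X (\<Inter>?G)"
  proof (rule closedin_Inter)
    show "?G \<noteq> {}" by simp
    fix S assume "S \<in> ?G"
    then show "closedin X S" using c1 c2 I by auto
  qed
  then show ?thesis using eq by simp
qed

lemma card_le_N: "I \<subseteq> {1..aN A} \<Longrightarrow> card I \<le> aN A"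
  using card_mono[of "{1..aN A}" I] by simp

lemma Dset_F: assumes I: "I \<subseteq> {1..aN A}"
  and f0: "\<And>i x. i \<in> {1..aN A} \<Longrightarrow> x \<in> topspace X - FP {i} \<Longrightarrow> f i x = 0"
  and x: "x \<in> Dset f I" and i: "i \<in> I" shows "x \<in> FP {i}"
proof (rule ccontr)
  assume n: "x \<notin> FP {i}"
  have "0 < lam (card I)" using lam_mu(4) card_le_N[OF I] by blast
  also have "lam (card I) \<le> f i x" using x i unfolding Dset_def by blast
  also have "f i x = 0" using f0[of i x] i I x n unfolding Dset_def by blast
  finally show False by simp
qed

lemma Dset_disj: assumes I: "I \<subseteq> {1..aN A}" and J: "J \<subseteq> {1..aN A}" and n: "\<not> I \<subseteq> J" "\<not> J \<subseteq> I"
  shows "Dset f I \<inter> Dset f J = {}"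
proof (rule ccontr)
  assume "Dset f I \<inter> Dset f J \<noteq> {}"
  then obtain x where x: "x \<in> Dset f I" "x \<in> Dset f J" by blast
  have gen: False if I': "I' \<subseteq> {1..aN A}" and J': "J' \<subseteq> {1..aN A}" and nI: "\<not> I' \<subseteq> J'"
    and c: "card I' \<le> card J'" and xI: "x \<in> Dset f I'" and xJ: "x \<in> Dset f J'" for I' J'
  proof -
    obtain i where i: "i \<in> I'" "i \<notin> J'" using nI by blast
    have a1: "\<forall>i\<in>I'. lam (card I') \<le> f i x" using xI unfolding Dset_def by simp
    have a2: "\<forall>j\<in>{1..aN A} - J'. f j x \<le> mu (card J')" using xJ unfolding Dset_def by simp
    have ii: "i \<in> {1..aN A} - J'" using i I' by blast
    have "lam (card I') \<le> f i x" using a1 i(1) by blast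
    moreover have "f i x \<le> mu (card J')" using a2 ii by blast
    moreover have "mu (card J') \<le> mu (card I')" using lam_mu(3)[OF c] .
    moreover have "mu (card I') < lam (card I')" using lam_mu(1) .
    ultimately show False by linarith
  qed
  show False
  proof (cases "card I \<le> card J")
    case True show False by (rule gen[OF I J n(1) True x(1) x(2)])
  next
    case False
    then have c: "card J \<le> card I" by simp
    show False by (rule gen[OF J I n(2) c x(2) x(1)])
  qed
qed

lemma Dset_cover: assumes K: "\<And>i y. i \<in> {1..aN A} \<Longrightarrow> y \<in> Kc i \<Longrightarrow> f i y = 1"
  and cov: "topspace X \<subseteq> (\<Union>i\<in>{1..aN A}. Kc i)" and x: "x \<in> topspace X"
  shows "\<exists>I. I \<noteq> {} \<and> I \<subseteq> {1..aN A} \<and> x \<in> Dset f I"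
proof -
  obtain i0 where i0: "i0 \<in> {1..aN A}" "x \<in> Kc i0" using cov x by blast
  have fi0: "f i0 x = 1" using K i0 by blast
  define As where "As k = {i\<in>{1..aN A}. lam k \<le> f i x}" for k
  define Bs where "Bs k = {i\<in>{1..aN A}. mu k < f i x}" for k
  define Q where "Q = {k\<in>{1..aN A}. k \<le> card (As k)}"
  have N1: "1 \<le> aN A" using i0 by simp
  have "i0 \<in> As 1" unfolding As_def using i0 fi0 lam_mu(5) by simp
  moreover have "finite (As 1)" unfolding As_def by simp
  ultimately have "card (As 1) > 0" using card_gt_0_iff by blast
  then have Q1: "1 \<in> Q" using N1 by (simp add: Q_def)
  have fQ: "finite Q" by (simp add: Q_def)
  define k where "k = Max Q"
  have kQ: "k \<in> Q" unfolding k_def using Max_in fQ Q1 by blast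
  have k1: "1 \<le> k" "k \<le> aN A" "k \<le> card (As k)" using kQ unfolding Q_def by auto
  have finB: "finite (Bs k)" by (simp add: Bs_def)
  have AB: "As k \<subseteq> Bs k" unfolding As_def Bs_def using lam_mu(1)[of k] by auto
  have cB: "card (Bs k) \<le> k"
  proof (cases "k = aN A")
    case True
    have "Bs k \<subseteq> {1..aN A}" by (auto simp: Bs_def)
    then show ?thesis using card_le_N True by blast
  next
    case False
    then have kl: "Suc k \<le> aN A" using k1 by simp
    have "Suc k \<notin> Q"
    proof
      assume "Suc k \<in> Q"
      then have "Suc k \<le> k" unfolding k_def using Max_ge fQ by blast
      then show False by simp
    qed
    then have c: "card (As (Suc k)) \<le> k" using kl by (simp add: Q_def)
    have "Bs k \<subseteq> As (Suc k)" unfolding As_def Bs_def using lam_mu(2)[of k] by auto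
    then have "card (Bs k) \<le> card (As (Suc k))" by (rule card_mono[rotated]) (simp add: As_def)
    then show ?thesis using c by simp
  qed
  have ABeq: "As k = Bs k" using card_subset_eq[OF finB AB] k1(3) cB card_mono[OF finB AB] by simp
  have cA: "card (As k) = k" using ABeq cB k1(3) by simp
  show ?thesis
  proof (intro exI conjI)
    show "As k \<noteq> {}" using cA k1(1) by auto
    show "As k \<subseteq> {1..aN A}" by (auto simp: As_def)
    show "x \<in> Dset f (As k)"
      unfolding Dset_def cA
    proof (intro CollectI conjI ballI)
      show "x \<in> topspace X" by (rule x)
      fix i assume "i \<in> As k" then show "lam k \<le> f i x" by (simp add: As_def)
    next
      fix j assume j: "j \<in> {1..aN A} - As k"
      then have "j \<notin> Bs k" using ABeq by simp
      then show "f j x \<le> mu k" using j by (auto simp: Bs_def)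
    qed
  qed
qed

lemma testP2: assumes "I \<in> Iz" "J \<in> Iz" "\<not> I \<subseteq> J" "\<not> J \<subseteq> I"
  shows "Dset f I \<inter> Dset f J = {}"
proof -
  have s1: "I \<subseteq> {1..aN A}" using assms(1) unfolding Iset_iff by blast
  have s2: "J \<subseteq> {1..aN A}" using assms(2) unfolding Iset_iff by blast
  show ?thesis by (rule Dset_disj[OF s1 s2 assms(3,4)])
qed

lemma P3a: assumes f1: "\<And>i y. i \<in> {1..aN A} \<Longrightarrow> y \<in> Kc i \<Longrightarrow> f i y = 1"
    and Kc3: "topspace X \<subseteq> (\<Union>i\<in>{1..aN A}. Kc i)" and x: "x \<in> topspace X"
  shows "\<exists>I. I \<noteq> {} \<and> I \<subseteq> {1..aN A} \<and> x \<in> Dset f I"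
  by (rule Dset_cover[OF f1 Kc3 x])

lemma P3b: assumes f0: "\<And>i x. i \<in> {1..aN A} \<Longrightarrow> x \<in> topspace X - FP {i} \<Longrightarrow> f i x = 0"
  and I: "I \<noteq> {}" "I \<subseteq> {1..aN A}" "x \<in> Dset f I"
  shows "I \<in> Iz"
proof -
  have "\<And>i. i \<in> I \<Longrightarrow> x \<in> FP {i}" by (rule Dset_F[OF I(2) f0 I(3)])
  then have "x \<in> (\<Inter>i\<in>I. FP {i})" by (rule INT_I)
  then show "I \<in> Iz" using I(1,2) unfolding Iset_iff by blast
qed

lemma P3c: assumes f1: "\<And>i y. i \<in> {1..aN A} \<Longrightarrow> y \<in> Kc i \<Longrightarrow> f i y = 1"
    and f0: "\<And>i x. i \<in> {1..aN A} \<Longrightarrow> x \<in> topspace X - FP {i} \<Longrightarrow> f i x = 0"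
    and Kc3: "topspace X \<subseteq> (\<Union>i\<in>{1..aN A}. Kc i)" and x: "x \<in> topspace X"
  shows "x \<in> (\<Union>I\<in>Iz. Dset f I)"
proof -
  have e: "\<exists>I. I \<noteq> {} \<and> I \<subseteq> {1..aN A} \<and> x \<in> Dset f I" by (rule P3a[OF f1 Kc3 x])
  from e obtain I where I: "I \<noteq> {}" "I \<subseteq> {1..aN A}" "x \<in> Dset f I" by (elim exE conjE)
  have II: "I \<in> Iz" by (rule P3b[OF f0 I])
  show ?thesis by (rule UN_I[where B="Dset f", OF II I(3)])
qed

lemma exists_D_given:
  assumes fc: "\<And>i. i \<in> {1..aN A} \<Longrightarrow> continuous_map X euclideanreal (f i)"
    and f1: "\<And>i y. i \<in> {1..aN A} \<Longrightarrow> y \<in> Kc i \<Longrightarrow> f i y = 1"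
    and f0: "\<And>i x. i \<in> {1..aN A} \<Longrightarrow> x \<in> topspace X - FP {i} \<Longrightarrow> f i x = 0"
    and Kc3: "topspace X \<subseteq> (\<Union>i\<in>{1..aN A}. Kc i)"
  shows "(\<forall>I\<in>Iz. compactin X (Dset f I) \<and> Dset f I \<subseteq> FP I) \<and>
   (\<forall>I\<in>Iz. \<forall>J\<in>Iz. \<not> I \<subseteq> J \<and> \<not> J \<subseteq> I \<longrightarrow> Dset f I \<inter> Dset f J = {}) \<and>
   topspace X \<subseteq> (\<Union>I\<in>Iz. Dset f I)"
proof (intro conjI)
  show "\<forall>I\<in>Iz. compactin X (Dset f I) \<and> Dset f I \<subseteq> FP I"
  proof
    fix I assume I: "I \<in> Iz"
    have Isub: "I \<subseteq> {1..aN A}" using I unfolding Iset_iff by blast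
    have "compactin X (Dset f I)" by (rule closedin_compact_space[OF cX Dset_closed[OF fc Isub]])
    moreover have "Dset f I \<subseteq> FP I"
    proof
      fix x assume x: "x \<in> Dset f I"
      have "\<And>i. i \<in> I \<Longrightarrow> x \<in> FP {i}" by (rule Dset_F[OF Isub f0 x])
      then have "x \<in> (\<Inter>i\<in>I. FP {i})" by (rule INT_I)
      then show "x \<in> FP I" using chart(2)[OF I] by simp
    qed
    ultimately show "compactin X (Dset f I) \<and> Dset f I \<subseteq> FP I" by (rule conjI)
  qed
  show "\<forall>I\<in>Iz. \<forall>J\<in>Iz. \<not> I \<subseteq> J \<and> \<not> J \<subseteq> I \<longrightarrow> Dset f I \<inter> Dset f J = {}"
  proof (intro ballI impI)
    fix I J assume a: "I \<in> Iz" "J \<in> Iz" "\<not> I \<subseteq> J \<and> \<not> J \<subseteq> I"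
    show "Dset f I \<inter> Dset f J = {}" using testP2[OF a(1,2)] a(3) by simp
  qed
  show "topspace X \<subseteq> (\<Union>I\<in>Iz. Dset f I)"
  proof (rule subsetI)
    fix x assume x: "x \<in> topspace X"
    show "x \<in> (\<Union>I\<in>Iz. Dset f I)" by (rule P3c[OF f1 f0 Kc3 x])
  qed
qed

lemma exists_D: "\<exists>D. (\<forall>I\<in>Iz. compactin X (D I) \<and> D I \<subseteq> FP I) \<and>
   (\<forall>I\<in>Iz. \<forall>J\<in>Iz. \<not> I \<subseteq> J \<and> \<not> J \<subseteq> I \<longrightarrow> D I \<inter> D J = {}) \<and> topspace X \<subseteq> (\<Union>I\<in>Iz. D I)"
proof -
  have rX: "regular_space X" using mX metrizable_imp_regular_space by blast
  have nX: "normal_space X" using mX metrizable_imp_normal_space by blast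
  have cov: "topspace X \<subseteq> (\<Union>i\<in>{1..aN A}. FP {i})"
    using td[unfolded transition_data_def, THEN conjunct2, THEN conjunct1] by simp
  have op: "openin X (FP {i})" if i: "i \<in> {1..aN A}" for i
  proof -
    have "is_kchart X (aK A {i})" using td[unfolded transition_data_def, THEN conjunct1] i by blast
    then show ?thesis by (simp add: is_kchart_def)
  qed
  obtain Kc where Kc: "\<And>i. i \<in> {1..aN A} \<Longrightarrow> closedin X (Kc i)" "\<And>i. i \<in> {1..aN A} \<Longrightarrow> Kc i \<subseteq> FP {i}"
    "topspace X \<subseteq> (\<Union>i\<in>{1..aN A}. Kc i)"
    using shrink[OF cX rX finite_atLeastAtMost op cov] by blast
  have "\<forall>i\<in>{1..aN A}. \<exists>g. continuous_map X euclideanreal g \<and> g ` Kc i \<subseteq> {1} \<and> g ` (topspace X - FP {i}) \<subseteq> {0}"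
  proof
    fix i assume i: "i \<in> {1..aN A}"
    have "closedin X (topspace X - FP {i})" using op[OF i] by blast
    moreover have "disjnt (Kc i) (topspace X - FP {i})" using Kc(2)[OF i] by (auto simp: disjnt_def)
    ultimately obtain g where "continuous_map X euclideanreal g" "g ` Kc i \<subseteq> {1}" "g ` (topspace X - FP {i}) \<subseteq> {0}"
      by (rule Urysohn_lemma_alt[OF nX Kc(1)[OF i]])
    then show "\<exists>g. continuous_map X euclideanreal g \<and> g ` Kc i \<subseteq> {1} \<and> g ` (topspace X - FP {i}) \<subseteq> {0}"
      by blast
  qed
  then obtain f where f0': "\<forall>i\<in>{1..aN A}. continuous_map X euclideanreal (f i) \<and>
      f i ` Kc i \<subseteq> {1} \<and> f i ` (topspace X - FP {i}) \<subseteq> {0}" by (rule bchoice[elim_format]) blast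
  have fc: "continuous_map X euclideanreal (f i)" if i: "i \<in> {1..aN A}" for i
    using f0' i by blast
  have f1: "f i y = 1" if i: "i \<in> {1..aN A}" and y: "y \<in> Kc i" for i y
  proof -
    have "f i ` Kc i \<subseteq> {1}" using f0' i by blast
    then have "f i y \<in> {1}" using y by blast
    then show ?thesis by simp
  qed
  have f0: "f i x = 0" if i: "i \<in> {1..aN A}" and x: "x \<in> topspace X - FP {i}" for i x
  proof -
    have "f i ` (topspace X - FP {i}) \<subseteq> {0}" using f0' i by blast
    then have "f i x \<in> {0}" using x by blast
    then show ?thesis by simp
  qed
  show ?thesis by (rule exI[of _ "Dset f"], rule exists_D_given[OF fc f1 f0 Kc(3)])
qed

end



context tka begin

definition Cset :: "(nat set \<Rightarrow> 'x set) \<Rightarrow> nat set \<Rightarrow> 'u set" where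
  "Cset D I = {x \<in> ZS I. psi I x \<in> D I}"

lemma C_ZS: "Cset D I \<subseteq> ZS I" by (auto simp: Cset_def)

lemma C_compact: assumes I: "I \<in> Iz" and D: "compactin X (D I)" "D I \<subseteq> FP I"
  shows "compactin (cU (aK A I)) (Cset D I)"
proof -
  have h: "homeomorphic_map (subtopology (cU (aK A I)) (ZS I)) (subtopology X (FP I)) (psi I)"
    by (rule chartfacts(8)[OF I])
  have t: "topspace (subtopology (cU (aK A I)) (ZS I)) = ZS I" using ZS_sub by auto
  have img: "psi I ` Cset D I = D I"
  proof
    show "psi I ` Cset D I \<subseteq> D I" by (auto simp: Cset_def)
    show "D I \<subseteq> psi I ` Cset D I"
    proof
      fix p assume p: "p \<in> D I"
      then have "p \<in> psi I ` ZS I" using psi_img(1)[OF I] D(2) by blast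
      then obtain z where z: "z \<in> ZS I" "p = psi I z" by blast
      then have "z \<in> Cset D I" using p by (simp add: Cset_def)
      then show "p \<in> psi I ` Cset D I" by (rule image_eqI[where f="psi I", OF z(2)])
    qed
  qed
  have "compactin (subtopology X (FP I)) (D I)" using D by (simp add: compactin_subtopology)
  then have "compactin (subtopology X (FP I)) (psi I ` Cset D I)" using img by simp
  moreover have "Cset D I \<subseteq> topspace (subtopology (cU (aK A I)) (ZS I))" using C_ZS t by simp
  ultimately have "compactin (subtopology (cU (aK A I)) (ZS I)) (Cset D I)"
    using homeomorphic_map_compactness[OF h] by blast
  then show ?thesis by (simp add: compactin_subtopology)
qed

definition Mset :: "nat set \<Rightarrow> nat set \<Rightarrow> ('u \<times> 'u) set" where
  "Mset I J = (if I \<inter> J = {} then {(x, y). x \<in> ZS I \<and> y \<in> ZS J \<and> psi I x = psi J y}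
     else {(phix A (I \<inter> J) I z, phix A (I \<inter> J) J z) | z. z \<in> UUx A (I \<inter> J) I \<inter> UUx A (I \<inter> J) J})"

lemma ZS_closed: "I \<in> Iz \<Longrightarrow> closedin (cU (aK A I)) (ZS I)"
  unfolding zeroset_def by (rule closedin_continuous_maps_eq[OF chartfacts(2,4,5)])

lemma psi_cont: assumes I: "I \<in> Iz" shows "continuous_map (subtopology (cU (aK A I)) (ZS I)) X (psi I)"
proof -
  have "continuous_map (subtopology (cU (aK A I)) (ZS I)) (subtopology X (FP I)) (psi I)"
    using homeomorphic_imp_continuous_map[OF chartfacts(8)[OF I]] .
  then show ?thesis by (metis continuous_map_in_subtopology)
qed

lemma M_closed: assumes I: "I \<in> Iz" and J: "J \<in> Iz" and n: "\<not> I \<subseteq> J" "\<not> J \<subseteq> I"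
  shows "closedin (prod_topology (cU (aK A I)) (cU (aK A J))) (Mset I J)"
proof (cases "I \<inter> J = {}")
  case True
  let ?P = "prod_topology (subtopology (cU (aK A I)) (ZS I)) (subtopology (cU (aK A J)) (ZS J))"
  have HX: "Hausdorff_space X" using mX metrizable_imp_Hausdorff_space by blast
  have c1: "continuous_map ?P X (psi I \<circ> fst)"
    by (rule continuous_map_compose[OF continuous_map_fst psi_cont[OF I]])
  have c2: "continuous_map ?P X (psi J \<circ> snd)"
    by (rule continuous_map_compose[OF continuous_map_snd psi_cont[OF J]])
  have cl: "closedin ?P {p \<in> topspace ?P. (psi I \<circ> fst) p = (psi J \<circ> snd) p}"
    by (rule closedin_continuous_maps_eq[OF HX c1 c2])
  have eqS: "{p \<in> topspace ?P. (psi I \<circ> fst) p = (psi J \<circ> snd) p} = Mset I J"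
    using True ZS_sub[of I] ZS_sub[of J] by (auto simp: Mset_def)
  have cl2: "closedin ?P (Mset I J)" using cl unfolding eqS .
  have eqP: "?P = subtopology (prod_topology (cU (aK A I)) (cU (aK A J))) (ZS I \<times> ZS J)"
    by (simp add: subtopology_Times)
  have cl3: "closedin (subtopology (prod_topology (cU (aK A I)) (cU (aK A J))) (ZS I \<times> ZS J)) (Mset I J)"
    using cl2 unfolding eqP .
  have clZ: "closedin (prod_topology (cU (aK A I)) (cU (aK A J))) (ZS I \<times> ZS J)"
    using ZS_closed[OF I] ZS_closed[OF J] by (simp add: closedin_prod_Times_iff)
  show ?thesis by (rule closedin_trans_full[OF cl3 clZ])
next
  case False
  define H where "H = I \<inter> J"
  have Hne: "H \<noteq> {}" using False H_def by simp
  have Hi: "H \<in> Iz" using Iset_down[OF I _ Hne] H_def by blast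
  have sHI: "H \<subset> I" using n(1) H_def by blast
  have sHJ: "H \<subset> J" using n(2) H_def by blast
  have HI: "H \<noteq> I" "H \<noteq> J" using sHI sHJ by auto
  have eqM: "Mset I J = {(aphi A H I z, aphi A H J z) | z. z \<in> aUU A H I \<inter> aUU A H J}"
    unfolding Mset_def H_def[symmetric]
    using Hne UU_eq[OF I HI(1)] UU_eq[OF J HI(2)] ph_eq[OF HI(1)] ph_eq[OF HI(2)] by simp
  have img: "aphi A H K ` aUU A H K = {x \<in> TU K. ss K x \<in> aEE A H K}"
    if K: "K \<in> Iz" "H \<subset> K" for K
  proof -
    have hk: "H \<noteq> K" using K(2) by blast
    have "phix A H K ` UUx A H K = UUx A K K \<inter> {x \<in> TU K. ss K x \<in> aEE A H K}"
      using tame2[OF Hi K(1) K(1) _ order_refl] K(2) by blast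
    then show ?thesis using UU_eq[OF K(1) hk] ph_eq[OF hk] UU_refl[OF K(1)] by auto
  qed
  have clK: "closedin (cU (aK A K)) (aphi A H K ` aUU A H K)" if K: "K \<in> Iz" "H \<subset> K" for K
  proof -
    have "H \<subseteq> K" using K(2) by blast
    then have "closedin (cU (aK A K)) {x \<in> TU K. ss K x \<in> aEE A H K}"
      by (rule closedin_continuous_map_preimage[OF chartfacts(4)[OF K(1)] EE_closed[OF K(1)]])
    then show ?thesis using img[OF K] by simp
  qed
  have subP: "aUU A H K \<subseteq> TU H" if K: "K \<in> Iz" "H \<subset> K" for K
    using cc_facts(1)[OF Hi K(1) K(2)] openin_subset by blast
  show ?thesis unfolding eqM
    by (rule closed_pair_img[OF chartfacts(1)[OF Hi] cc_facts(4)[OF Hi I sHI] cc_facts(4)[OF Hi J sHJ]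
          clK[OF I sHI] clK[OF J sHJ] subP[OF I sHI] subP[OF J sHJ]])
qed

lemma M_rel: assumes I: "I \<in> Iz" and J: "J \<in> Iz" and x: "x \<in> TU I"
  and r: "((I, x), (J, y)) \<in> kequiv A"
  shows "(x, y) \<in> Mset I J"
proof -
  have R: "Rel I x J y" by (rule kequiv_Rel[OF r I x])
  show ?thesis
  proof (cases "I \<inter> J = {}")
    case True
    then show ?thesis using NF0[OF R True] unfolding Mset_def by simp
  next
    case False
    obtain z where z: "z \<in> UUx A (I \<inter> J) I" "z \<in> UUx A (I \<inter> J) J"
        "x = phix A (I \<inter> J) I z" "y = phix A (I \<inter> J) J z"
      using NF1[OF R refl False] by blast
    show ?thesis unfolding Mset_def using False z by auto
  qed
qed

lemma M_disj: assumes I: "I \<in> Iz" and J: "J \<in> Iz" and DD: "D I \<inter> D J = {}"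
  shows "(Cset D I \<times> Cset D J) \<inter> Mset I J = {}"
proof (rule ccontr)
  assume "(Cset D I \<times> Cset D J) \<inter> Mset I J \<noteq> {}"
  then obtain x y where xy: "x \<in> Cset D I" "y \<in> Cset D J" "(x, y) \<in> Mset I J" by auto
  have xZ: "x \<in> ZS I" "psi I x \<in> D I" and yZ: "y \<in> ZS J" "psi J y \<in> D J"
    using xy(1,2) by (auto simp: Cset_def)
  have "psi I x = psi J y"
  proof (cases "I \<inter> J = {}")
    case True
    then show ?thesis using xy(3) unfolding Mset_def by simp
  next
    case False
    define H where "H = I \<inter> J"
    have Hi: "H \<in> Iz" using Iset_down[OF I _ False] H_def by blast
    have HI: "H \<subseteq> I" "H \<subseteq> J" using H_def by auto
    obtain z where z: "z \<in> UUx A H I" "z \<in> UUx A H J" "x = phix A H I z" "y = phix A H J z"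
      using xy(3) False unfolding Mset_def H_def by auto
    have zZ: "z \<in> ZS H" using ph_zero2[OF Hi I HI(1) z(1)] xZ(1) z(3) by simp
    have "psi I x = psi H z" using ph_zero1(2)[OF Hi I HI(1) z(1) zZ] z(3) by simp
    moreover have "psi J y = psi H z" using ph_zero1(2)[OF Hi J HI(2) z(2) zZ] z(4) by simp
    ultimately show ?thesis by simp
  qed
  then show False using xZ(2) yZ(2) DD by auto
qed

lemma kequiv_class: assumes "(a, b) \<in> kequiv A" shows "piK A a = piK A b"
proof -
  have sy: "sym (kequiv A)" unfolding kequiv_def by (rule sym_rtrancl) (simp add: sym_Un_converse)
  have tr: "trans (kequiv A)" unfolding kequiv_def by (rule trans_rtrancl)
  have ba: "(b, a) \<in> kequiv A" using sy assms by (rule symD)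
  show ?thesis unfolding piK_def
  proof
    show "kequiv A `` {a} \<subseteq> kequiv A `` {b}"
    proof
      fix z assume "z \<in> kequiv A `` {a}"
      then have "(a, z) \<in> kequiv A" by simp
      then have "(b, z) \<in> kequiv A" by (rule transD[OF tr ba])
      then show "z \<in> kequiv A `` {b}" by simp
    qed
    show "kequiv A `` {b} \<subseteq> kequiv A `` {a}"
    proof
      fix z assume "z \<in> kequiv A `` {b}"
      then have "(b, z) \<in> kequiv A" by simp
      then have "(a, z) \<in> kequiv A" by (rule transD[OF tr assms])
      then show "z \<in> kequiv A `` {a}" by simp
    qed
  qed
qed

lemma piK_rel: assumes "piK A a = piK A b" shows "(a, b) \<in> kequiv A"
proof -
  have "(b, b) \<in> kequiv A" unfolding kequiv_def by simp
  then have "b \<in> piK A b" unfolding piK_def by simp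
  then have "b \<in> piK A a" using assms by simp
  then show ?thesis unfolding piK_def by simp
qed

lemma finite_Iz_sub: "finite {J \<in> Iz. P J}"
  using finite_Iset by simp

lemma reduction_exists: "\<exists>V. is_reduction A V"
proof -
  obtain D where D1: "\<forall>I\<in>Iz. compactin X (D I) \<and> D I \<subseteq> FP I"
    and D2: "\<forall>I\<in>Iz. \<forall>J\<in>Iz. \<not> I \<subseteq> J \<and> \<not> J \<subseteq> I \<longrightarrow> D I \<inter> D J = {}"
    and D3: "topspace X \<subseteq> (\<Union>I\<in>Iz. D I)"
    using exists_D by blast
  have Cc: "compactin (cU (aK A I)) (Cset D I)" if I: "I \<in> Iz" for I
    using C_compact[OF I] D1 I by blast
  have ex: "\<exists>W. I \<in> Iz \<and> J \<in> Iz \<and> \<not> I \<subseteq> J \<and> \<not> J \<subseteq> I \<longrightarrow>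
      (openin (cU (aK A I)) (fst W) \<and> openin (cU (aK A J)) (snd W) \<and>
       Cset D I \<subseteq> fst W \<and> Cset D J \<subseteq> snd W \<and>
       (((cU (aK A I)) closure_of (fst W)) \<times> ((cU (aK A J)) closure_of (snd W))) \<inter> Mset I J = {})" for I J
  proof (cases "I \<in> Iz \<and> J \<in> Iz \<and> \<not> I \<subseteq> J \<and> \<not> J \<subseteq> I")
    case True
    then have I: "I \<in> Iz" "J \<in> Iz" "\<not> I \<subseteq> J" "\<not> J \<subseteq> I" by auto
    have dd: "D I \<inter> D J = {}" using D2 I by blast
    have dis: "(Cset D I \<times> Cset D J) \<inter> Mset I J = {}" by (rule M_disj[OF I(1,2) dd])
    have "\<exists>W1 W2. openin (cU (aK A I)) W1 \<and> openin (cU (aK A J)) W2 \<and> Cset D I \<subseteq> W1 \<and> Cset D J \<subseteq> W2 \<and>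
     compactin (cU (aK A I)) ((cU (aK A I)) closure_of W1) \<and> compactin (cU (aK A J)) ((cU (aK A J)) closure_of W2) \<and>
     (((cU (aK A I)) closure_of W1) \<times> ((cU (aK A J)) closure_of W2)) \<inter> Mset I J = {}"
      by (rule pair_sep[OF chartfacts(3)[OF I(1)] chartfacts(1)[OF I(1)] chartfacts(3)[OF I(2)]
            chartfacts(1)[OF I(2)] Cc[OF I(1)] Cc[OF I(2)] M_closed[OF I] dis])
    then obtain W1 W2 where W: "openin (cU (aK A I)) W1" "openin (cU (aK A J)) W2" "Cset D I \<subseteq> W1"
      "Cset D J \<subseteq> W2" "(((cU (aK A I)) closure_of W1) \<times> ((cU (aK A J)) closure_of W2)) \<inter> Mset I J = {}"
      by blast
    show ?thesis by (rule exI[of _ "(W1, W2)"]) (use W in simp)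
  next
    case False
    show ?thesis by (rule exI[of _ "({}, {})"]) (use False in blast)
  qed
  then obtain Wf where Wf: "\<And>I J. I \<in> Iz \<and> J \<in> Iz \<and> \<not> I \<subseteq> J \<and> \<not> J \<subseteq> I \<longrightarrow>
      (openin (cU (aK A I)) (fst (Wf I J)) \<and> openin (cU (aK A J)) (snd (Wf I J)) \<and>
       Cset D I \<subseteq> fst (Wf I J) \<and> Cset D J \<subseteq> snd (Wf I J) \<and>
       (((cU (aK A I)) closure_of (fst (Wf I J))) \<times> ((cU (aK A J)) closure_of (snd (Wf I J)))) \<inter> Mset I J = {})"
    by metis
  have ex0: "\<exists>W. I \<in> Iz \<longrightarrow> openin (cU (aK A I)) W \<and> Cset D I \<subseteq> W \<and>
       compactin (cU (aK A I)) ((cU (aK A I)) closure_of W)" for I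
  proof (cases "I \<in> Iz")
    case True
    have "Cset D I \<subseteq> TU I" using C_ZS ZS_sub by blast
    then obtain W where "openin (cU (aK A I)) W" "Cset D I \<subseteq> W" "compactin (cU (aK A I)) ((cU (aK A I)) closure_of W)"
      using lc_nbhd[OF chartfacts(3)[OF True] chartfacts(1)[OF True] Cc[OF True] openin_topspace] by metis
    then show ?thesis by blast
  next
    case False show ?thesis by (rule exI[of _ "{}"]) (use False in blast)
  qed
  then obtain W0 where W0: "\<And>I. I \<in> Iz \<longrightarrow> openin (cU (aK A I)) (W0 I) \<and> Cset D I \<subseteq> W0 I \<and>
       compactin (cU (aK A I)) ((cU (aK A I)) closure_of (W0 I))" by metis
  define NN where "NN I = {J \<in> Iz. \<not> I \<subseteq> J \<and> \<not> J \<subseteq> I}" for I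
  define V where "V I = (if Cset D I = {} then {} else
      \<Inter>(insert (W0 I) ((\<lambda>J. fst (Wf I J) \<inter> snd (Wf J I)) ` NN I)))" for I
  have NNI: "J \<in> NN I \<longleftrightarrow> J \<in> Iz \<and> \<not> I \<subseteq> J \<and> \<not> J \<subseteq> I" for I J by (simp add: NN_def)
  have V_open: "openin (cU (aK A I)) (V I)" if I: "I \<in> Iz" for I
  proof (cases "Cset D I = {}")
    case True then show ?thesis by (simp add: V_def)
  next
    case False
    have "openin (cU (aK A I)) (\<Inter>(insert (W0 I) ((\<lambda>J. fst (Wf I J) \<inter> snd (Wf J I)) ` NN I)))"
    proof (rule openin_Inter)
      show "finite (insert (W0 I) ((\<lambda>J. fst (Wf I J) \<inter> snd (Wf J I)) ` NN I))"
        unfolding NN_def using finite_Iz_sub by simp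
      show "insert (W0 I) ((\<lambda>J. fst (Wf I J) \<inter> snd (Wf J I)) ` NN I) \<noteq> {}" by simp
      fix S assume S: "S \<in> insert (W0 I) ((\<lambda>J. fst (Wf I J) \<inter> snd (Wf J I)) ` NN I)"
      show "openin (cU (aK A I)) S"
      proof (cases "S = W0 I")
        case True then show ?thesis using W0[of I] I by simp
      next
        case False
        then obtain J where J: "J \<in> NN I" "S = fst (Wf I J) \<inter> snd (Wf J I)" using S by blast
        have J': "J \<in> Iz" "\<not> I \<subseteq> J" "\<not> J \<subseteq> I" using J(1) NNI by auto
        have "openin (cU (aK A I)) (fst (Wf I J))" using Wf[of I J] I J' by blast
        moreover have "openin (cU (aK A I)) (snd (Wf J I))" using Wf[of J I] I J' by blast
        ultimately show ?thesis using J(2) by (simp add: openin_Int)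
      qed
    qed
    then show ?thesis using False by (simp add: V_def)
  qed
  have C_V: "Cset D I \<subseteq> V I" if I: "I \<in> Iz" for I
  proof (cases "Cset D I = {}")
    case True then show ?thesis by simp
  next
    case False
    have "Cset D I \<subseteq> S" if S: "S \<in> insert (W0 I) ((\<lambda>J. fst (Wf I J) \<inter> snd (Wf J I)) ` NN I)" for S
    proof (cases "S = W0 I")
      case True then show ?thesis using W0[of I] I by simp
    next
      case False
      then obtain J where J: "J \<in> NN I" "S = fst (Wf I J) \<inter> snd (Wf J I)" using S by blast
      have J': "J \<in> Iz" "\<not> I \<subseteq> J" "\<not> J \<subseteq> I" using J(1) NNI by auto
      have "Cset D I \<subseteq> fst (Wf I J)" using Wf[of I J] I J' by blast
      moreover have "Cset D I \<subseteq> snd (Wf J I)" using Wf[of J I] I J' by blast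
      ultimately show ?thesis using J(2) by simp
    qed
    then show ?thesis using False unfolding V_def by (simp add: Inter_greatest)
  qed
  have V_W0: "V I \<subseteq> W0 I" for I by (auto simp: V_def)
  have V_fst: "V I \<subseteq> fst (Wf I J)" if "J \<in> Iz" "\<not> I \<subseteq> J" "\<not> J \<subseteq> I" for I J
  proof -
    have "J \<in> NN I" using that NNI by auto
    then show ?thesis unfolding V_def by auto
  qed
  have V_snd: "V J \<subseteq> snd (Wf I J)" if "I \<in> Iz" "\<not> I \<subseteq> J" "\<not> J \<subseteq> I" for I J
  proof -
    have "I \<in> NN J" using that NNI by auto
    then show ?thesis unfolding V_def by auto
  qed
  have cl_compact: "compactin (cU (aK A I)) ((cU (aK A I)) closure_of (V I))" if I: "I \<in> Iz" for I
  proof -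
    have "(cU (aK A I)) closure_of (V I) \<subseteq> (cU (aK A I)) closure_of (W0 I)"
      by (rule closure_of_mono[OF V_W0])
    moreover have "compactin (cU (aK A I)) ((cU (aK A I)) closure_of (W0 I))" using W0[of I] I by blast
    ultimately show ?thesis using closed_compactin closedin_closure_of by blast
  qed
  have part1: "\<forall>I\<in>Iz. openin (cU (aK A I)) (V I) \<and>
        compactin (cU (aK A I)) ((cU (aK A I)) closure_of (V I)) \<and>
        (V I \<noteq> {} \<longrightarrow> V I \<inter> ZS I \<noteq> {})"
  proof
    fix I assume I: "I \<in> Iz"
    have "V I \<noteq> {} \<longrightarrow> V I \<inter> ZS I \<noteq> {}"
    proof
      assume "V I \<noteq> {}"
      then have "Cset D I \<noteq> {}" by (auto simp: V_def)
      moreover have "Cset D I \<subseteq> V I \<inter> ZS I" using C_V[OF I] C_ZS by blast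
      ultimately show "V I \<inter> ZS I \<noteq> {}" by blast
    qed
    then show "openin (cU (aK A I)) (V I) \<and> compactin (cU (aK A I)) ((cU (aK A I)) closure_of (V I)) \<and>
        (V I \<noteq> {} \<longrightarrow> V I \<inter> ZS I \<noteq> {})" using V_open[OF I] cl_compact[OF I] by blast
  qed
  have part2: "\<forall>I\<in>Iz. \<forall>J\<in>Iz.
        piK_img A I ((cU (aK A I)) closure_of (V I)) \<inter>
        piK_img A J ((cU (aK A J)) closure_of (V J)) \<noteq> {} \<longrightarrow> I \<subseteq> J \<or> J \<subseteq> I"
  proof (intro ballI impI)
    fix I J assume I: "I \<in> Iz" and J: "J \<in> Iz"
      and ne: "piK_img A I ((cU (aK A I)) closure_of (V I)) \<inter> piK_img A J ((cU (aK A J)) closure_of (V J)) \<noteq> {}"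
    show "I \<subseteq> J \<or> J \<subseteq> I"
    proof (rule ccontr)
      assume nn: "\<not> (I \<subseteq> J \<or> J \<subseteq> I)"
      then have n1: "\<not> I \<subseteq> J" and n2: "\<not> J \<subseteq> I" by auto
      obtain c where c1: "c \<in> piK_img A I ((cU (aK A I)) closure_of (V I))"
        and c2: "c \<in> piK_img A J ((cU (aK A J)) closure_of (V J))" using ne by blast
      obtain x where x: "x \<in> (cU (aK A I)) closure_of (V I)" "c = piK A (I, x)"
        using c1 unfolding piK_img_def by blast
      obtain y where y: "y \<in> (cU (aK A J)) closure_of (V J)" "c = piK A (J, y)"
        using c2 unfolding piK_img_def by blast
      have r: "((I, x), (J, y)) \<in> kequiv A" by (rule piK_rel) (use x y in simp)
      have xT: "x \<in> TU I" using x(1) closure_of_subset_topspace[of "cU (aK A I)" "V I"] by blast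
      have M: "(x, y) \<in> Mset I J" by (rule M_rel[OF I J xT r])
      have "x \<in> (cU (aK A I)) closure_of (fst (Wf I J))"
        using closure_of_mono[OF V_fst[OF J n1 n2]] x(1) by blast
      moreover have "y \<in> (cU (aK A J)) closure_of (snd (Wf I J))"
        using closure_of_mono[OF V_snd[OF I n1 n2]] y(1) by blast
      moreover have "(((cU (aK A I)) closure_of (fst (Wf I J))) \<times> ((cU (aK A J)) closure_of (snd (Wf I J)))) \<inter> Mset I J = {}"
        using Wf[of I J] I J n1 n2 by blast
      ultimately show False using M by blast
    qed
  qed
  have part3: "iotaX A \<subseteq> (\<Union>I\<in>Iz. piK_img A I (V I))"
  proof
    fix c assume "c \<in> iotaX A"
    then obtain K x where K: "K \<in> Iz" "x \<in> ZS K" "c = piK A (K, x)"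
      unfolding iotaX_def by blast
    have p: "psi K x \<in> topspace X" using psi_img(1)[OF K(1)] FP_sub[OF K(1)] K(2) by blast
    then obtain I where I: "I \<in> Iz" "psi K x \<in> D I" using D3 by blast
    have "psi K x \<in> psi I ` ZS I" using psi_img(1)[OF I(1)] D1 I by blast
    then obtain z where z: "z \<in> ZS I" "psi K x = psi I z" by blast
    have zC: "z \<in> Cset D I" using z I(2) by (simp add: Cset_def)
    have zV: "z \<in> V I" using C_V[OF I(1)] zC by blast
    have "piK A (K, x) = piK A (I, z)" by (rule kequiv_class[OF zero_equiv[OF K(1) I(1) K(2) z(1) z(2)]])
    then have "c \<in> piK_img A I (V I)" unfolding piK_img_def using K(3) zV by blast
    then show "c \<in> (\<Union>I\<in>Iz. piK_img A I (V I))" by (rule UN_I[where B="\<lambda>I. piK_img A I (V I)", OF I(1)])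
  qed
  show ?thesis unfolding is_reduction_def using part1 part2 part3 by blast
qed

end

theorem mainTheorem16:
  fixes X :: "'x topology" and A :: "('x, 'u, 'e) katlas"
  assumes "compact_space X" and "metrizable_space X"
    and "tame_kur_atlas X A"
  shows "\<exists>V. is_reduction A V"
proof -
  interpret tka X A by unfold_locales (fact assms)+
  show ?thesis by (rule reduction_exists)
qed

end
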